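(* Let periodic point sets $S,Q\subset\mathbb R^n$ have bottleneck distance $d_B(S,Q)<r(Q)$, where the packing radius $r(Q)$ is the minimum half-distance between any two distinct points of $Q$. Then for any radius $\alpha\ge0$, $\mathrm{EMD}(I(S;\alpha),I(Q;\alpha))\le 2d_B(S,Q)$.
   Context: A periodic point set is $S=M+\Lambda\subset\mathbb R^n$ with $\Lambda=\{\sum c_iv_i:c_i\in\mathbb Z\}$ a lattice, $U=\{\sum c_iv_i:c_i\in[0,1)\}$ a unit cell and $M\subset U$ a finite motif of $m$ points. Bottleneck distance: $d_B(S,Q)=\inf_{g}\sup_{p\in S}|p-g(p)|$ over all bijections $g:S\to Q$. For $p\in S$, the $\alpha$-cluster $C(S,p;\alpha)=S\cap\bar B(p;\alpha)$ has center $p$; points $p,q$ are $\alpha$-equivalent if some isometry of $\mathbb R^n$ maps $C(S,p;\alpha)$ onto $C(S,q;\alpha)$ with $p\mapsto q$. The isoset $I(S;\alpha)$ is the unordered set of pairs $(\sigma,w)$, one for each $\alpha$-equivalence class meeting $M$ in $k$ points, where $\sigma$ is the isometry class (under center-preserving isometries) of the $\alpha$-cluster of one of these points and $w=k/m$. For finite $C,D\subset\mathbb R^n$: $d_H(C,D)=\max_{p\in C}\min_{q\in D}|p-q|$, $d_R(C,D)=\min_{f\in\mathrm O(\mathbb R^n)}d_H(f(C),D)$. For classes $\sigma,\xi$ represented by $C(S,p;\alpha),C(Q,q;\alpha)$, $d_C(\sigma,\xi)$ is the minimum $\varepsilon\in[0,\alpha]$ with $d_R(C(S,p;\alpha-\varepsilon)-p,C(Q,q;\alpha)-q)\le\varepsilon$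 and $d_R(C(Q,q;\alpha-\varepsilon)-q,C(S,p;\alpha)-p)\le\varepsilon$. For $I(S;\alpha)=\{(\sigma_i,w_i)\}_{i=1}^{m(S)}$, $I(Q;\alpha)=\{(\xi_j,v_j)\}_{j=1}^{m(Q)}$, $\mathrm{EMD}(I(S;\alpha),I(Q;\alpha))$ is the minimum of $\sum_{i,j}f_{ij}d_C(\sigma_i,\xi_j)$ over $f_{ij}\in[0,1]$ with $\sum_jf_{ij}\le w_i$, $\sum_if_{ij}\le v_j$, $\sum_{i,j}f_{ij}=1$. *)

theory Defs
  imports "HOL-Analysis.Analysis" "HOL-Library.Extended_Real"
begin

text \<open>Points live in an abstract Euclidean space 'a (= R^n, n = DIM('a)).
  A lattice basis is a linearly independent set B of DIM('a) vectors.\<close>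

definition lattice :: "'a::euclidean_space set \<Rightarrow> 'a set" where
  "lattice B = {(\<Sum>v\<in>B. c v *\<^sub>R v) | c. \<forall>v\<in>B. c v \<in> \<int>}"

definition unit_cell :: "'a::euclidean_space set \<Rightarrow> 'a set" where
  "unit_cell B = {(\<Sum>v\<in>B. c v *\<^sub>R v) | c. \<forall>v\<in>B. c v \<in> {0..<1}}"

definition periodic_rep :: "'a::euclidean_space set \<Rightarrow> 'a set \<Rightarrow> 'a set \<Rightarrow> bool" where
  "periodic_rep B M S \<longleftrightarrow>
     independent B \<and> card B = DIM('a) \<and>
     finite M \<and> M \<noteq> {} \<and> M \<subseteq> unit_cell B \<and>
     S = {p + l | p l. p \<in> M \<and> l \<in> lattice B}"

definition bottleneck_dist :: "'a::euclidean_space set \<Rightarrow> 'a set \<Rightarrow> ereal" where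
  "bottleneck_dist S Q = (INF g\<in>{g. bij_betw g S Q}. SUP p\<in>S. ereal (norm (p - g p)))"

definition packing_radius :: "'a::euclidean_space set \<Rightarrow> real" where
  "packing_radius Q = Inf {dist p q / 2 | p q. p \<in> Q \<and> q \<in> Q \<and> p \<noteq> q}"

definition cluster :: "'a::euclidean_space set \<Rightarrow> 'a \<Rightarrow> real \<Rightarrow> 'a set" where
  "cluster S p \<alpha> = S \<inter> cball p \<alpha>"

definition isometry :: "('a::euclidean_space \<Rightarrow> 'a) \<Rightarrow> bool" where
  "isometry f \<longleftrightarrow> (\<forall>x y. dist (f x) (f y) = dist x y)"

definition alpha_equiv :: "'a::euclidean_space set \<Rightarrow> real \<Rightarrow> 'a \<Rightarrow> 'a \<Rightarrow> bool" where
  "alpha_equiv S \<alpha> p q \<longleftrightarrow>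
     (\<exists>f. isometry f \<and> f ` cluster S p \<alpha> = cluster S q \<alpha> \<and> f p = q)"

definition dH :: "'a::euclidean_space set \<Rightarrow> 'a set \<Rightarrow> real" where
  "dH C D = Max ((\<lambda>p. Min ((\<lambda>q. dist p q) ` D)) ` C)"

definition dR :: "'a::euclidean_space set \<Rightarrow> 'a set \<Rightarrow> real" where
  "dR C D = (INF f\<in>{f. orthogonal_transformation f}. dH (f ` C) D)"

text \<open>Distance between the isometry classes of the alpha-clusters of p in S and q in Q.\<close>
definition dC :: "'a::euclidean_space set \<Rightarrow> 'a \<Rightarrow> 'a set \<Rightarrow> 'a \<Rightarrow> real \<Rightarrow> real" where
  "dC S p Q q \<alpha> = Inf {\<epsilon> \<in> {0..\<alpha>}.
       dR ((\<lambda>x. x - p) ` cluster S p (\<alpha> - \<epsilon>)) ((\<lambda>x. x - q) ` cluster Q q \<alpha>) \<le> \<epsilon> \<and>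
       dR ((\<lambda>x. x - q) ` cluster Q q (\<alpha> - \<epsilon>)) ((\<lambda>x. x - p) ` cluster S p \<alpha>) \<le> \<epsilon>}"

text \<open>The isoset I(S;alpha): the alpha-equivalence classes meeting the motif M
  (each given by its intersection with M), with weight k/m.\<close>
definition iso_classes :: "'a::euclidean_space set \<Rightarrow> 'a set \<Rightarrow> real \<Rightarrow> 'a set set" where
  "iso_classes S M \<alpha> = (\<lambda>p. {q \<in> M. alpha_equiv S \<alpha> p q}) ` M"

definition iso_weight :: "'a set \<Rightarrow> 'a set \<Rightarrow> real" where
  "iso_weight M K = real (card K) / real (card M)"

definition class_rep :: "'a set \<Rightarrow> 'a" where
  "class_rep K = (SOME p. p \<in> K)"

definition EMD_iso :: "'a::euclidean_space set \<Rightarrow> 'a set \<Rightarrow> 'a set \<Rightarrow> 'a set \<Rightarrow> real \<Rightarrow> real" where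
  "EMD_iso S MotS Q MotQ \<alpha> = Inf
     {(\<Sum>K\<in>iso_classes S MotS \<alpha>. \<Sum>L\<in>iso_classes Q MotQ \<alpha>.
          F K L * dC S (class_rep K) Q (class_rep L) \<alpha>) | F.
        (\<forall>K\<in>iso_classes S MotS \<alpha>. \<forall>L\<in>iso_classes Q MotQ \<alpha>. F K L \<in> {0..1}) \<and>
        (\<forall>K\<in>iso_classes S MotS \<alpha>. (\<Sum>L\<in>iso_classes Q MotQ \<alpha>. F K L) \<le> iso_weight MotS K) \<and>
        (\<forall>L\<in>iso_classes Q MotQ \<alpha>. (\<Sum>K\<in>iso_classes S MotS \<alpha>. F K L) \<le> iso_weight MotQ L) \<and>
        (\<Sum>K\<in>iso_classes S MotS \<alpha>. \<Sum>L\<in>iso_classes Q MotQ \<alpha>. F K L) = 1}"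

end

theory Submission
  imports Defs "HOL-Library.FuncSet"
begin
lemma basis_facts:
  fixes B :: "'a::euclidean_space set"
  assumes "independent B" "card B = DIM('a)"
  shows "finite B" "span B = UNIV"
proof -
  show fB: "finite B" using assms(2) DIM_positive card.infinite by (metis less_irrefl)
  have "UNIV \<subseteq> span B"
    using card_eq_dim[of B UNIV] assms fB by auto
  then show "span B = UNIV" by auto
qed

lemma coef_unique:
  fixes B :: "'a::euclidean_space set"
  assumes "independent B" "finite B"
    and "(\<Sum>v\<in>B. c v *\<^sub>R v) = (\<Sum>v\<in>B. d v *\<^sub>R v)"
  shows "\<forall>v\<in>B. c v = d v"
proof -
  have "(\<Sum>v\<in>B. (c v - d v) *\<^sub>R v) = 0"
    using assms(3) by (simp add: scaleR_diff_left sum_subtractf)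
  then have "\<forall>v\<in>B. c v - d v = 0"
  proof -
    have H: "\<forall>c. (\<Sum>v\<in>B. c v *\<^sub>R v) = 0 \<longrightarrow> (\<forall>v\<in>B. c v = 0)"
      using assms(1) unfolding independent_explicit by blast
    show ?thesis using H[rule_format, of "\<lambda>v. c v - d v"] \<open>(\<Sum>v\<in>B. (c v - d v) *\<^sub>R v) = 0\<close> by blast
  qed
  then show ?thesis by auto
qed

lemma coef_bound:
  fixes B :: "'a::euclidean_space set"
  assumes "independent B" "card B = DIM('a)"
  shows "\<exists>K>0. \<forall>c. \<forall>v\<in>B. \<bar>c v\<bar> \<le> K * norm (\<Sum>w\<in>B. c w *\<^sub>R w)"
proof -
  note bf = basis_facts[OF assms]
  have lin: "linear (\<lambda>x. representation B x v)" for v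
    unfolding linear_iff
    using assms(1) bf(2)
    by (auto simp: real_vector.representation_add real_vector.representation_scale)
  have "\<forall>v\<in>B. \<exists>K>0. \<forall>x. \<bar>representation B x v\<bar> \<le> K * norm x"
  proof
    fix v
    have "bounded_linear (\<lambda>x. representation B x v)"
      using lin linear_conv_bounded_linear by blast
    then obtain K where "K > 0" "\<forall>x. norm (representation B x v) \<le> norm x * K"
      using bounded_linear.pos_bounded by blast
    then show "\<exists>K>0. \<forall>x. \<bar>representation B x v\<bar> \<le> K * norm x"
      by (auto simp: mult.commute)
  qed
  then obtain Kf where Kf: "\<forall>v\<in>B. Kf v > 0 \<and> (\<forall>x. \<bar>representation B x v\<bar> \<le> Kf v * norm x)"
    by metis
  define K where "K = (\<Sum>v\<in>B. Kf v) + 1"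
  have Kpos: "K > 0" unfolding K_def using Kf by (smt (verit) sum_nonneg)
  have KfK: "Kf v \<le> K" if "v \<in> B" for v
  proof -
    have "Kf v \<le> sum Kf B" using that Kf bf(1) by (intro member_le_sum) (auto simp: less_imp_le)
    then show ?thesis unfolding K_def by simp
  qed
  have rep: "representation B (\<Sum>w\<in>B. c w *\<^sub>R w) v = c v" if "v \<in> B" for c v
  proof -
    let ?x = "\<Sum>w\<in>B. c w *\<^sub>R w"
    have "(\<Sum>w\<in>B. representation B ?x w *\<^sub>R w) = ?x"
      using real_vector.sum_representation_eq[OF assms(1), of ?x B] bf by auto
    then show ?thesis using coef_unique[OF assms(1) bf(1)] that by metis
  qed
  show ?thesis
  proof (intro exI[of _ K] conjI allI ballI Kpos)
    fix c v assume "v \<in> B"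
    then have "\<bar>c v\<bar> \<le> Kf v * norm (\<Sum>w\<in>B. c w *\<^sub>R w)"
      using Kf rep by metis
    also have "\<dots> \<le> K * norm (\<Sum>w\<in>B. c w *\<^sub>R w)"
      using KfK[OF \<open>v \<in> B\<close>] by (simp add: mult_right_mono)
    finally show "\<bar>c v\<bar> \<le> K * norm (\<Sum>w\<in>B. c w *\<^sub>R w)" .
  qed
qed

lemma lattice_add:
  assumes "x \<in> lattice B" "y \<in> lattice B" shows "x + y \<in> lattice B"
proof -
  obtain c where c: "x = (\<Sum>v\<in>B. c v *\<^sub>R v)" "\<forall>v\<in>B. c v \<in> \<int>" using assms(1) unfolding lattice_def by blast
  obtain d where d: "y = (\<Sum>v\<in>B. d v *\<^sub>R v)" "\<forall>v\<in>B. d v \<in> \<int>" using assms(2) unfolding lattice_def by blast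
  have "x + y = (\<Sum>v\<in>B. (c v + d v) *\<^sub>R v)" using c d by (simp add: scaleR_add_left sum.distrib)
  moreover have "\<forall>v\<in>B. c v + d v \<in> \<int>" using c d by auto
  ultimately show ?thesis unfolding lattice_def
    by (intro CollectI exI[of _ "\<lambda>v. c v + d v"]) auto
qed

lemma lattice_uminus:
  assumes "x \<in> lattice B" shows "- x \<in> lattice B"
proof -
  obtain c where c: "x = (\<Sum>v\<in>B. c v *\<^sub>R v)" "\<forall>v\<in>B. c v \<in> \<int>" using assms(1) unfolding lattice_def by blast
  have "- x = (\<Sum>v\<in>B. (- c v) *\<^sub>R v)" using c by (simp add: sum_negf)
  moreover have "\<forall>v\<in>B. - c v \<in> \<int>" using c by auto
  ultimately show ?thesis unfolding lattice_def
    by (intro CollectI exI[of _ "\<lambda>v. - c v"]) auto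
qed

lemma lattice_diff:
  assumes "x \<in> lattice B" "y \<in> lattice B" shows "x - y \<in> lattice B"
  using lattice_add[OF assms(1) lattice_uminus[OF assms(2)]] by simp

lemma lattice_zero: "0 \<in> lattice B"
proof -
  have "0 = (\<Sum>v\<in>B. (0::real) *\<^sub>R v)" by simp
  then show ?thesis unfolding lattice_def by (intro CollectI exI[of _ "\<lambda>v. 0"]) simp
qed

lemma decomp_unique:
  fixes B :: "'a::euclidean_space set"
  assumes "independent B" "finite B"
    and "p \<in> unit_cell B" "p' \<in> unit_cell B" "l \<in> lattice B" "l' \<in> lattice B"
    and "p + l = p' + l'"
  shows "p = p'"
proof -
  obtain a where a: "p = (\<Sum>v\<in>B. a v *\<^sub>R v)" "\<forall>v\<in>B. a v \<in> {0..<1}" using assms(3) unfolding unit_cell_def by blast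
  obtain a' where a': "p' = (\<Sum>v\<in>B. a' v *\<^sub>R v)" "\<forall>v\<in>B. a' v \<in> {0..<1}" using assms(4) unfolding unit_cell_def by blast
  obtain c where c: "l = (\<Sum>v\<in>B. c v *\<^sub>R v)" "\<forall>v\<in>B. c v \<in> \<int>" using assms(5) unfolding lattice_def by blast
  obtain c' where c': "l' = (\<Sum>v\<in>B. c' v *\<^sub>R v)" "\<forall>v\<in>B. c' v \<in> \<int>" using assms(6) unfolding lattice_def by blast
  have "(\<Sum>v\<in>B. (a v + c v) *\<^sub>R v) = (\<Sum>v\<in>B. (a' v + c' v) *\<^sub>R v)"
    using assms(7) a c a' c' by (simp add: scaleR_add_left sum.distrib)
  then have eq: "\<forall>v\<in>B. a v + c v = a' v + c' v" using coef_unique[OF assms(1,2), of "\<lambda>v. a v + c v" "\<lambda>v. a' v + c' v"] by blast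
  have "a v = a' v" if vB: "v \<in> B" for v
  proof -
    have "a v - a' v = c' v - c v" using eq vB by auto
    moreover have "c' v - c v \<in> \<int>" using c c' vB by auto
    then obtain z where z: "c' v - c v = of_int z" by (auto elim: Ints_cases)
    moreover have "a v \<in> {0..<1}" "a' v \<in> {0..<1}" using a(2) a'(2) vB by auto
    then have "\<bar>a v - a' v\<bar> < 1" by auto
    ultimately have "\<bar>real_of_int z\<bar> < 1" by simp
    then have "z = 0" by linarith
    then show ?thesis using z \<open>a v - a' v = c' v - c v\<close> by simp
  qed
  then show ?thesis unfolding a(1) a'(1) by (intro sum.cong) auto
qed

lemma lattice_ball:
  fixes B :: "'a::euclidean_space set"
  assumes "independent B" "card B = DIM('a)"
  shows "\<exists>K>0. \<forall>R\<ge>0. finite (lattice B \<inter> cball 0 R) \<and>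
            card (lattice B \<inter> cball 0 R) \<le> (2 * nat \<lceil>K * R\<rceil> + 1) ^ DIM('a)"
proof -
  note bf = basis_facts[OF assms]
  obtain K where K: "K > 0" "\<forall>c. \<forall>v\<in>B. \<bar>c v\<bar> \<le> K * norm (\<Sum>w\<in>B. c w *\<^sub>R w)"
    using coef_bound[OF assms] by blast
  show ?thesis
  proof (intro exI[of _ K] conjI allI impI K(1))
    fix R :: real assume R: "R \<ge> 0"
    define M where "M = \<lceil>K * R\<rceil>"
    have "K * R \<ge> 0" using K R by simp
    then have M0: "M \<ge> 0" unfolding M_def by linarith
    define A where "A = real_of_int ` {-M..M}"
    define P where "P = PiE B (\<lambda>_. A)"
    define f where "f = (\<lambda>c. \<Sum>v\<in>B. c v *\<^sub>R v)"
    have sub: "lattice B \<inter> cball 0 R \<subseteq> f ` P"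
    proof
      fix x assume x: "x \<in> lattice B \<inter> cball 0 R"
      then obtain c where c: "x = (\<Sum>v\<in>B. c v *\<^sub>R v)" "\<forall>v\<in>B. c v \<in> \<int>" unfolding lattice_def by blast
      have nx: "norm x \<le> R" using x by auto
      have "restrict c B \<in> P"
      proof -
        have "c v \<in> A" if vB: "v \<in> B" for v
        proof -
          have "c v \<in> \<int>" using c(2) vB by blast
          then obtain z where z: "c v = of_int z" by (auto elim: Ints_cases)
          have "\<bar>c v\<bar> \<le> K * norm x" using K(2) vB unfolding c(1) by blast
          also have "\<dots> \<le> K * R" using nx K(1) by (simp add: mult_left_mono)
          finally have "\<bar>real_of_int z\<bar> \<le> K * R" using z by simp
          then have "real_of_int z \<le> K * R" "real_of_int (- z) \<le> K * R" by auto
          then have "\<lceil>real_of_int z\<rceil> \<le> M" "\<lceil>real_of_int (-z)\<rceil> \<le> M" unfolding M_def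
            by (metis ceiling_mono)+
          then have "z \<le> M" "-z \<le> M" by (simp only: ceiling_of_int)+
          then have "z \<in> {-M..M}" by simp
          then show ?thesis unfolding A_def using z by auto
        qed
        then show ?thesis unfolding P_def by (simp add: restrict_PiE_iff)
      qed
      moreover have "f (restrict c B) = x" unfolding f_def c(1) by (rule sum.cong) auto
      ultimately show "x \<in> f ` P" by (metis image_eqI)
    qed
    have finA: "finite A" unfolding A_def by simp
    have finP: "finite P" unfolding P_def using bf(1) finA by (simp add: finite_PiE)
    show "finite (lattice B \<inter> cball 0 R)" using sub finP finite_subset by blast
    have cA: "card A = 2 * nat M + 1"
    proof -
      have "card A = card {-M..M}" unfolding A_def by (rule card_image) (meson inj_onI of_int_eq_iff)
      also have "\<dots> = nat (2 * M + 1)" by simp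
      also have "\<dots> = 2 * nat M + 1" using M0 by (simp add: nat_add_distrib nat_mult_distrib)
      finally show ?thesis .
    qed
    have cP: "card P = (2 * nat M + 1) ^ DIM('a)"
      unfolding P_def by (simp only: card_PiE[OF bf(1)] prod_constant cA assms(2))
    have "card (lattice B \<inter> cball 0 R) \<le> card (f ` P)" using sub finP by (simp add: card_mono)
    also have "\<dots> \<le> card P" using finP card_image_le by blast
    also have "\<dots> = (2 * nat M + 1) ^ DIM('a)" by (rule cP)
    finally show "card (lattice B \<inter> cball 0 R) \<le> (2 * nat \<lceil>K * R\<rceil> + 1) ^ DIM('a)"
      unfolding M_def .
  qed
qed

lemma orth_dist: "orthogonal_transformation T \<Longrightarrow> dist (T x) (T y) = dist x y"
  by (metis dist_norm orthogonal_transformation_linear linear_diff orthogonal_transformation_norm)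

lemma orth_inv_apply:
  fixes T :: "'a::euclidean_space \<Rightarrow> 'a"
  assumes "orthogonal_transformation T"
  shows "inv T (T x) = x" "T (inv T x) = x"
  using orthogonal_transformation_bij[OF assms] by (auto simp: bij_def inv_f_f surj_f_inv_f)

lemma dH_le:
  fixes C D :: "'a::euclidean_space set"
  assumes "finite C" "finite D" "D \<noteq> {}" "C \<noteq> {}"
    and "\<And>x. x \<in> C \<Longrightarrow> \<exists>y\<in>D. dist x y \<le> e"
  shows "dH C D \<le> e"
  unfolding dH_def
proof (subst Max_le_iff)
  show "finite ((\<lambda>p. Min ((\<lambda>q. dist p q) ` D)) ` C)" using assms by simp
  show "(\<lambda>p. Min ((\<lambda>q. dist p q) ` D)) ` C \<noteq> {}" using assms by simp
  show "\<forall>a\<in>(\<lambda>p. Min ((\<lambda>q. dist p q) ` D)) ` C. a \<le> e"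
  proof
    fix a assume "a \<in> (\<lambda>p. Min ((\<lambda>q. dist p q) ` D)) ` C"
    then obtain x where x: "x \<in> C" "a = Min ((\<lambda>q. dist x q) ` D)" by blast
    obtain y where y: "y \<in> D" "dist x y \<le> e" using assms(5)[OF x(1)] by blast
    have "Min ((\<lambda>q. dist x q) ` D) \<le> dist x y" using y(1) assms(2) by (intro Min_le) auto
    then show "a \<le> e" using x y by linarith
  qed
qed

lemma dH_nonneg:
  fixes C D :: "'a::euclidean_space set"
  assumes "finite C" "finite D" "D \<noteq> {}" "C \<noteq> {}"
  shows "dH C D \<ge> 0"
proof -
  obtain x where x: "x \<in> C" using assms by blast
  have "0 \<le> Min ((\<lambda>q. dist x q) ` D)" using assms by (subst Min_ge_iff) auto
  also have "\<dots> \<le> dH C D" unfolding dH_def using assms x by (intro Max_ge) auto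
  finally show ?thesis .
qed

lemma dH_orth_right:
  fixes C D :: "'a::euclidean_space set"
  assumes "orthogonal_transformation T"
  shows "dH C (T ` D) = dH (inv T ` C) D"
proof -
  have "Min ((\<lambda>q. dist p q) ` T ` D) = Min ((\<lambda>q. dist (inv T p) q) ` D)" for p
  proof -
    have "(\<lambda>q. dist p q) ` T ` D = (\<lambda>q. dist (inv T p) q) ` D"
    proof -
      have "dist p (T q) = dist (inv T p) q" for q
        using orth_dist[OF assms, of "inv T p" q] orth_inv_apply[OF assms] by simp
      then show ?thesis by (auto simp: image_image)
    qed
    then show ?thesis by simp
  qed
  then show ?thesis unfolding dH_def by (simp add: image_image)
qed

lemma dH_nonneg_img:
  fixes C D :: "'a::euclidean_space set"
  assumes "finite C" "finite D" "D \<noteq> {}" "C \<noteq> {}"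
  shows "bdd_below ((\<lambda>f. dH (f ` C) D) ` A)"
  using dH_nonneg[of "_ ` C" D] assms by (intro bdd_belowI[of _ 0]) auto

lemma dR_le_dH:
  fixes C D :: "'a::euclidean_space set"
  assumes "finite C" "finite D" "D \<noteq> {}" "C \<noteq> {}"
  shows "dR C D \<le> dH C D"
proof -
  have "dR C D \<le> dH ((\<lambda>x. x) ` C) D"
    unfolding dR_def
    by (rule cINF_lower[OF dH_nonneg_img[OF assms]]) simp
  then show ?thesis by simp
qed

lemma dR_orth_left:
  fixes C D :: "'a::euclidean_space set"
  assumes "orthogonal_transformation T"
  shows "dR (T ` C) D = dR C D"
proof -
  let ?A = "{f::'a\<Rightarrow>'a. orthogonal_transformation f}"
  have eq: "(\<lambda>f. f \<circ> T) ` ?A = ?A"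
  proof
    show "(\<lambda>f. f \<circ> T) ` ?A \<subseteq> ?A" using assms orthogonal_transformation_compose by auto
    show "?A \<subseteq> (\<lambda>f. f \<circ> T) ` ?A"
    proof
      fix h assume h: "h \<in> ?A"
      have "h = (h \<circ> inv T) \<circ> T" using orth_inv_apply[OF assms] by (auto simp: fun_eq_iff)
      moreover have "h \<circ> inv T \<in> ?A"
        using h orthogonal_transformation_inv[OF assms] orthogonal_transformation_compose by auto
      ultimately show "h \<in> (\<lambda>f. f \<circ> T) ` ?A" by blast
    qed
  qed
  have "dR (T ` C) D = (INF f\<in>?A. dH ((f \<circ> T) ` C) D)"
    unfolding dR_def by (simp add: image_comp)
  also have "\<dots> = (INF h\<in>(\<lambda>f. f \<circ> T) ` ?A. dH (h ` C) D)"
    by (simp add: image_comp)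
  also have "\<dots> = dR C D" unfolding dR_def eq ..
  finally show ?thesis .
qed

lemma dR_orth_right:
  fixes C D :: "'a::euclidean_space set"
  assumes "orthogonal_transformation T"
  shows "dR C (T ` D) = dR C D"
proof -
  let ?A = "{f::'a\<Rightarrow>'a. orthogonal_transformation f}"
  have oi: "orthogonal_transformation (inv T)" using orthogonal_transformation_inv[OF assms] .
  have eq: "(\<lambda>f. inv T \<circ> f) ` ?A = ?A"
  proof
    show "(\<lambda>f. inv T \<circ> f) ` ?A \<subseteq> ?A" using oi orthogonal_transformation_compose by auto
    show "?A \<subseteq> (\<lambda>f. inv T \<circ> f) ` ?A"
    proof
      fix h assume h: "h \<in> ?A"
      have "h = inv T \<circ> (T \<circ> h)" using orth_inv_apply[OF assms] by (auto simp: fun_eq_iff)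
      moreover have "T \<circ> h \<in> ?A"
        using h assms orthogonal_transformation_compose by auto
      ultimately show "h \<in> (\<lambda>f. inv T \<circ> f) ` ?A" by blast
    qed
  qed
  have "dR C (T ` D) = (INF f\<in>?A. dH ((inv T \<circ> f) ` C) D)"
    unfolding dR_def dH_orth_right[OF assms] by (simp add: image_comp)
  also have "\<dots> = (INF h\<in>(\<lambda>f. inv T \<circ> f) ` ?A. dH (h ` C) D)"
    by (simp add: image_comp)
  also have "\<dots> = dR C D" unfolding dR_def eq ..
  finally show ?thesis .
qed

lemma dC_sym: "dC S p Q q \<alpha> = dC Q q S p \<alpha>"
  unfolding dC_def by (simp add: conj_commute)

lemma isometry_affine:
  fixes f :: "'a::euclidean_space \<Rightarrow> 'a"
  assumes "isometry f"
  shows "\<exists>T. orthogonal_transformation T \<and> (\<forall>x. f x = f a + T (x - a))"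
proof -
  define T where "T x = f (x + a) - f a" for x
  have "orthogonal_transformation T"
    unfolding orthogonal_transformation_isometry
    using assms unfolding isometry_def T_def by (simp add: dist_norm)
  moreover have "\<forall>x. f x = f a + T (x - a)" unfolding T_def by simp
  ultimately show ?thesis by blast
qed

lemma isometry_bij:
  fixes f :: "'a::euclidean_space \<Rightarrow> 'a"
  assumes "isometry f"
  shows "bij f"
proof -
  obtain T where T: "orthogonal_transformation T" "\<forall>x. f x = f 0 + T (x - 0)"
    using isometry_affine[OF assms] by blast
  have "bij T" using orthogonal_transformation_bij[OF T(1)] .
  have "f = (\<lambda>y. f 0 + y) \<circ> T"
  proof (rule ext)
    fix x show "f x = ((\<lambda>y. f 0 + y) \<circ> T) x" using T(2) by (metis comp_apply diff_zero)
  qed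
  moreover have "bij (\<lambda>y. f 0 + y :: 'a)"
    by (rule bij_betwI[where g="\<lambda>y. y - f 0"]) auto
  moreover have "bij ((\<lambda>y. f 0 + y) \<circ> T)" using bij_comp[OF \<open>bij T\<close> \<open>bij (\<lambda>y. f 0 + y)\<close>] .
  ultimately show ?thesis by simp
qed

lemma isometry_inv:
  fixes f :: "'a::euclidean_space \<Rightarrow> 'a"
  assumes "isometry f"
  shows "isometry (inv f)"
proof -
  have b: "bij f" using isometry_bij[OF assms] .
  show ?thesis unfolding isometry_def
  proof (intro allI)
    fix x y
    have "dist (f (inv f x)) (f (inv f y)) = dist (inv f x) (inv f y)"
      using assms unfolding isometry_def by blast
    then show "dist (inv f x) (inv f y) = dist x y"
      using b by (simp add: bij_is_surj surj_f_inv_f)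
  qed
qed

lemma alpha_equiv_refl: "alpha_equiv S \<alpha> p p"
  unfolding alpha_equiv_def isometry_def by (intro exI[of _ id]) auto

lemma alpha_equiv_sym:
  fixes S :: "'a::euclidean_space set"
  assumes "alpha_equiv S \<alpha> p q" shows "alpha_equiv S \<alpha> q p"
proof -
  obtain f where f: "isometry f" "f ` cluster S p \<alpha> = cluster S q \<alpha>" "f p = q"
    using assms unfolding alpha_equiv_def by blast
  have b: "bij f" using isometry_bij[OF f(1)] .
  have "inv f ` cluster S q \<alpha> = cluster S p \<alpha>"
    using f(2) b by (metis bij_is_inj image_inv_f_f)
  moreover have "inv f q = p" using f(3) b by (metis bij_is_inj inv_f_f)
  ultimately show ?thesis unfolding alpha_equiv_def using isometry_inv[OF f(1)] by blast
qed

lemma alpha_equiv_trans: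
  fixes S :: "'a::euclidean_space set"
  assumes "alpha_equiv S \<alpha> p q" "alpha_equiv S \<alpha> q r" shows "alpha_equiv S \<alpha> p r"
proof -
  obtain f where f: "isometry f" "f ` cluster S p \<alpha> = cluster S q \<alpha>" "f p = q"
    using assms(1) unfolding alpha_equiv_def by blast
  obtain g where g: "isometry g" "g ` cluster S q \<alpha> = cluster S r \<alpha>" "g q = r"
    using assms(2) unfolding alpha_equiv_def by blast
  have "isometry (g \<circ> f)" using f(1) g(1) unfolding isometry_def by simp
  moreover have "(g \<circ> f) ` cluster S p \<alpha> = cluster S r \<alpha>" using f(2) g(2) by (metis image_comp)
  moreover have "(g \<circ> f) p = r" using f g by simp
  ultimately show ?thesis unfolding alpha_equiv_def by blast
qed

lemma cluster_shrink:
  fixes S :: "'a::euclidean_space set"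
  assumes "isometry f" "f ` cluster S p \<alpha> = cluster S q \<alpha>" "f p = q" "r \<le> \<alpha>"
  shows "f ` cluster S p r = cluster S q r"
proof
  show "f ` cluster S p r \<subseteq> cluster S q r"
  proof
    fix y assume "y \<in> f ` cluster S p r"
    then obtain x where x: "x \<in> cluster S p r" "y = f x" by blast
    have "x \<in> cluster S p \<alpha>" using x(1) assms(4) unfolding cluster_def by auto
    then have "y \<in> S" using assms(2) x(2) unfolding cluster_def by blast
    moreover have "dist q y = dist p x" using assms(1,3) x(2) unfolding isometry_def by metis
    ultimately show "y \<in> cluster S q r" using x(1) unfolding cluster_def by auto
  qed
  show "cluster S q r \<subseteq> f ` cluster S p r"
  proof
    fix y assume y: "y \<in> cluster S q r"
    then have "y \<in> cluster S q \<alpha>" using assms(4) unfolding cluster_def by auto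
    then obtain x where x: "x \<in> cluster S p \<alpha>" "y = f x" using assms(2) by blast
    have "dist q y = dist p x" using assms(1,3) x(2) unfolding isometry_def by metis
    then have "x \<in> cluster S p r" using x(1) y unfolding cluster_def by auto
    then show "y \<in> f ` cluster S p r" using x(2) by blast
  qed
qed

lemma tr_cluster_iso:
  fixes S :: "'a::euclidean_space set"
  assumes "alpha_equiv S \<alpha> p p'"
  shows "\<exists>T. orthogonal_transformation T \<and>
    (\<forall>r\<le>\<alpha>. (\<lambda>x. x - p') ` cluster S p' r = T ` ((\<lambda>x. x - p) ` cluster S p r))"
proof -
  obtain f where f: "isometry f" "f ` cluster S p \<alpha> = cluster S p' \<alpha>" "f p = p'"
    using assms unfolding alpha_equiv_def by blast
  obtain T where T: "orthogonal_transformation T" "\<forall>x. f x = f p + T (x - p)"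
    using isometry_affine[OF f(1)] by blast
  have "(\<lambda>x. x - p') ` cluster S p' r = T ` ((\<lambda>x. x - p) ` cluster S p r)" if "r \<le> \<alpha>" for r
  proof -
    have "(\<lambda>x. x - p') ` cluster S p' r = (\<lambda>x. x - p') ` f ` cluster S p r"
      using cluster_shrink[OF f that] by simp
    also have "\<dots> = (\<lambda>x. f x - p') ` cluster S p r" by (simp add: image_image)
    also have "\<dots> = (\<lambda>x. T (x - p)) ` cluster S p r"
    proof (rule image_cong[OF refl])
      fix x show "f x - p' = T (x - p)" using T(2) f(3) by (metis add_diff_cancel_left')
    qed
    also have "\<dots> = T ` ((\<lambda>x. x - p) ` cluster S p r)" by (simp add: image_image)
    finally show ?thesis .
  qed
  then show ?thesis using T(1) by blast
qed

lemma dC_inv_left: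
  fixes S Q :: "'a::euclidean_space set"
  assumes "alpha_equiv S \<alpha> p p'"
  shows "dC S p Q q \<alpha> = dC S p' Q q \<alpha>"
proof -
  obtain T where T: "orthogonal_transformation T"
    "\<forall>r\<le>\<alpha>. (\<lambda>x. x - p') ` cluster S p' r = T ` ((\<lambda>x. x - p) ` cluster S p r)"
    using tr_cluster_iso[OF assms] by blast
  have "{\<epsilon> \<in> {0..\<alpha>}.
       dR ((\<lambda>x. x - p) ` cluster S p (\<alpha> - \<epsilon>)) ((\<lambda>x. x - q) ` cluster Q q \<alpha>) \<le> \<epsilon> \<and>
       dR ((\<lambda>x. x - q) ` cluster Q q (\<alpha> - \<epsilon>)) ((\<lambda>x. x - p) ` cluster S p \<alpha>) \<le> \<epsilon>}
      = {\<epsilon> \<in> {0..\<alpha>}.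
       dR ((\<lambda>x. x - p') ` cluster S p' (\<alpha> - \<epsilon>)) ((\<lambda>x. x - q) ` cluster Q q \<alpha>) \<le> \<epsilon> \<and>
       dR ((\<lambda>x. x - q) ` cluster Q q (\<alpha> - \<epsilon>)) ((\<lambda>x. x - p') ` cluster S p' \<alpha>) \<le> \<epsilon>}"
  proof (rule Collect_cong)
    fix \<epsilon>
    show "(\<epsilon> \<in> {0..\<alpha>} \<and>
       dR ((\<lambda>x. x - p) ` cluster S p (\<alpha> - \<epsilon>)) ((\<lambda>x. x - q) ` cluster Q q \<alpha>) \<le> \<epsilon> \<and>
       dR ((\<lambda>x. x - q) ` cluster Q q (\<alpha> - \<epsilon>)) ((\<lambda>x. x - p) ` cluster S p \<alpha>) \<le> \<epsilon>) =
      (\<epsilon> \<in> {0..\<alpha>} \<and>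
       dR ((\<lambda>x. x - p') ` cluster S p' (\<alpha> - \<epsilon>)) ((\<lambda>x. x - q) ` cluster Q q \<alpha>) \<le> \<epsilon> \<and>
       dR ((\<lambda>x. x - q) ` cluster Q q (\<alpha> - \<epsilon>)) ((\<lambda>x. x - p') ` cluster S p' \<alpha>) \<le> \<epsilon>)"
    proof (cases "\<epsilon> \<in> {0..\<alpha>}")
      case True
      then have "\<alpha> - \<epsilon> \<le> \<alpha>" by auto
      then show ?thesis using T True by (simp add: dR_orth_left dR_orth_right)
    qed auto
  qed
  then show ?thesis unfolding dC_def by simp
qed

lemma dC_inv_right:
  fixes S Q :: "'a::euclidean_space set"
  assumes "alpha_equiv Q \<alpha> q q'"
  shows "dC S p Q q \<alpha> = dC S p Q q' \<alpha>"
  using dC_inv_left[OF assms, of S p] by (simp add: dC_sym)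

definition locfin :: "'a::euclidean_space set \<Rightarrow> bool" where
  "locfin S \<longleftrightarrow> (\<forall>c r. finite (S \<inter> cball c r))"

lemma cluster_facts:
  fixes S :: "'a::euclidean_space set"
  assumes "locfin S" "p \<in> S" "r \<ge> 0"
  shows "finite ((\<lambda>x. x - p) ` cluster S p r)" "(\<lambda>x. x - p) ` cluster S p r \<noteq> {}"
    "0 \<in> (\<lambda>x. x - p) ` cluster S p r"
  using assms unfolding locfin_def cluster_def by auto

lemma dC_le_witness:
  fixes S Q :: "'a::euclidean_space set"
  assumes "\<epsilon> \<in> {0..\<alpha>}"
    "dR ((\<lambda>x. x - p) ` cluster S p (\<alpha> - \<epsilon>)) ((\<lambda>x. x - q) ` cluster Q q \<alpha>) \<le> \<epsilon>"
    "dR ((\<lambda>x. x - q) ` cluster Q q (\<alpha> - \<epsilon>)) ((\<lambda>x. x - p) ` cluster S p \<alpha>) \<le> \<epsilon>"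
  shows "dC S p Q q \<alpha> \<le> \<epsilon>"
  unfolding dC_def by (rule cInf_lower) (use assms in auto)

lemma cluster0:
  assumes "p \<in> S" shows "cluster S p 0 = {p}"
  using assms unfolding cluster_def by auto

lemma dC_bounds:
  fixes S Q :: "'a::euclidean_space set"
  assumes "locfin S" "locfin Q" "p \<in> S" "q \<in> Q" "\<alpha> \<ge> 0"
  shows "0 \<le> dC S p Q q \<alpha>" "dC S p Q q \<alpha> \<le> \<alpha>"
proof -
  let ?E = "{\<epsilon> \<in> {0..\<alpha>}.
       dR ((\<lambda>x. x - p) ` cluster S p (\<alpha> - \<epsilon>)) ((\<lambda>x. x - q) ` cluster Q q \<alpha>) \<le> \<epsilon> \<and>
       dR ((\<lambda>x. x - q) ` cluster Q q (\<alpha> - \<epsilon>)) ((\<lambda>x. x - p) ` cluster S p \<alpha>) \<le> \<epsilon>}"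
  note cS = cluster_facts[OF assms(1,3,5)] and cQ = cluster_facts[OF assms(2,4,5)]
  have A1: "dR ((\<lambda>x. x - p) ` cluster S p (\<alpha> - \<alpha>)) ((\<lambda>x. x - q) ` cluster Q q \<alpha>) \<le> \<alpha>"
  proof -
    have "dR {0} ((\<lambda>x. x - q) ` cluster Q q \<alpha>) \<le> dH {0} ((\<lambda>x. x - q) ` cluster Q q \<alpha>)"
      using cQ by (intro dR_le_dH) auto
    also have "\<dots> \<le> 0" using cQ by (intro dH_le) force+
    finally show ?thesis using cluster0[OF assms(3)] assms(5) by simp
  qed
  have A2: "dR ((\<lambda>x. x - q) ` cluster Q q (\<alpha> - \<alpha>)) ((\<lambda>x. x - p) ` cluster S p \<alpha>) \<le> \<alpha>"
  proof -
    have "dR {0} ((\<lambda>x. x - p) ` cluster S p \<alpha>) \<le> dH {0} ((\<lambda>x. x - p) ` cluster S p \<alpha>)"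
      using cS by (intro dR_le_dH) auto
    also have "\<dots> \<le> 0" using cS by (intro dH_le) force+
    finally show ?thesis using cluster0[OF assms(4)] assms(5) by simp
  qed
  have "\<alpha> \<in> ?E" using assms(5) A1 A2 by (intro CollectI conjI) auto
  have bdd: "bdd_below ?E" by (rule bdd_belowI[of _ 0]) auto
  show "dC S p Q q \<alpha> \<le> \<alpha>" unfolding dC_def using cInf_lower[OF \<open>\<alpha> \<in> ?E\<close> bdd] .
  have ne: "?E \<noteq> {}" using \<open>\<alpha> \<in> ?E\<close> by blast
  show "0 \<le> dC S p Q q \<alpha>" unfolding dC_def by (rule cInf_greatest[OF ne]) auto
qed

lemma dC_bij_bound:
  fixes S Q :: "'a::euclidean_space set"
  assumes "locfin S" "locfin Q" "bij_betw g S Q" "\<forall>x\<in>S. dist x (g x) \<le> \<delta>"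
    "p \<in> S" "\<alpha> \<ge> 0"
  shows "dC S p Q (g p) \<alpha> \<le> 2 * \<delta>"
proof (cases "2 * \<delta> \<le> \<alpha>")
  case False
  have "g p \<in> Q" using assms(3,5) bij_betwE by blast
  then show ?thesis using dC_bounds(2)[OF assms(1,2,5) _ assms(6)] False by force
next
  case True
  have gpQ: "g p \<in> Q" using assms(3,5) bij_betwE by blast
  have d0: "\<delta> \<ge> 0" using assms(4,5) by (meson dist_not_less_zero order_trans linorder_not_le)
  note cS = cluster_facts[OF assms(1,5)] and cQ = cluster_facts[OF assms(2) gpQ]
  show ?thesis
  proof (rule dC_le_witness)
    show "2 * \<delta> \<in> {0..\<alpha>}" using True d0 by auto
    let ?X = "(\<lambda>x. x - p) ` cluster S p (\<alpha> - 2 * \<delta>)"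
    let ?Y = "(\<lambda>x. x - g p) ` cluster Q (g p) \<alpha>"
    have "dR ?X ?Y \<le> dH ?X ?Y" using cS[of "\<alpha> - 2*\<delta>"] cQ[of \<alpha>] True assms(6) by (intro dR_le_dH) auto
    also have "\<dots> \<le> 2 * \<delta>"
    proof (rule dH_le)
      show "finite ?X" "?X \<noteq> {}" using cS[of "\<alpha> - 2*\<delta>"] True by auto
      show "finite ?Y" "?Y \<noteq> {}" using cQ[of \<alpha>] assms(6) by auto
      fix x assume "x \<in> ?X"
      then obtain s where s: "s \<in> S" "dist p s \<le> \<alpha> - 2 * \<delta>" "x = s - p" unfolding cluster_def by auto
      have gs: "g s \<in> Q" using assms(3) s(1) bij_betwE by blast
      have e1: "dist s (g s) \<le> \<delta>" "dist p (g p) \<le> \<delta>" using assms(4,5) s(1) by auto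
      have "dist (g p) (g s) \<le> dist (g p) p + dist p s + dist s (g s)"
        by (metis dist_triangle order_trans add_right_mono)
      then have "dist (g p) (g s) \<le> \<alpha>" using e1 s(2) by (simp add: dist_commute)
      then have "g s - g p \<in> ?Y" using gs unfolding cluster_def by auto
      moreover have "dist x (g s - g p) \<le> 2 * \<delta>"
      proof -
        have eq: "x - (g s - g p) = (s - g s) - (p - g p)" using s(3) by (simp add: algebra_simps)
        have "dist x (g s - g p) = norm ((s - g s) - (p - g p))" unfolding dist_norm eq ..
        also have "\<dots> \<le> norm (s - g s) + norm (p - g p)" by (rule norm_triangle_ineq4)
        also have "\<dots> \<le> 2 * \<delta>" using e1 by (simp add: dist_norm)
        finally show ?thesis .
      qed
      ultimately show "\<exists>y\<in>?Y. dist x y \<le> 2 * \<delta>" by blast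
    qed
    finally show "dR ?X ?Y \<le> 2 * \<delta>" .
  next
    let ?X = "(\<lambda>x. x - g p) ` cluster Q (g p) (\<alpha> - 2 * \<delta>)"
    let ?Y = "(\<lambda>x. x - p) ` cluster S p \<alpha>"
    have "dR ?X ?Y \<le> dH ?X ?Y" using cQ[of "\<alpha> - 2*\<delta>"] cS[of \<alpha>] True assms(6) by (intro dR_le_dH) auto
    also have "\<dots> \<le> 2 * \<delta>"
    proof (rule dH_le)
      show "finite ?X" "?X \<noteq> {}" using cQ[of "\<alpha> - 2*\<delta>"] True by auto
      show "finite ?Y" "?Y \<noteq> {}" using cS[of \<alpha>] assms(6) by auto
      fix x assume "x \<in> ?X"
      then obtain q where q: "q \<in> Q" "dist (g p) q \<le> \<alpha> - 2 * \<delta>" "x = q - g p" unfolding cluster_def by auto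
      obtain s where s: "s \<in> S" "q = g s" using assms(3) q(1) unfolding bij_betw_def by blast
      have e1: "dist s (g s) \<le> \<delta>" "dist p (g p) \<le> \<delta>" using assms(4,5) s(1) by auto
      have "dist p s \<le> dist p (g p) + dist (g p) (g s) + dist (g s) s"
        by (metis dist_triangle order_trans add_right_mono)
      then have "dist p s \<le> \<alpha>" using e1 q(2) s(2) by (simp add: dist_commute)
      then have "s - p \<in> ?Y" using s(1) unfolding cluster_def by auto
      moreover have "dist x (s - p) \<le> 2 * \<delta>"
      proof -
        have eq: "x - (s - p) = (g s - s) - (g p - p)" using q(3) s(2) by (simp add: algebra_simps)
        have "dist x (s - p) = norm ((g s - s) - (g p - p))" unfolding dist_norm eq ..
        also have "\<dots> \<le> norm (g s - s) + norm (g p - p)" by (rule norm_triangle_ineq4)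
        also have "\<dots> \<le> 2 * \<delta>" using e1 by (simp add: dist_norm norm_minus_commute)
        finally show ?thesis .
      qed
      ultimately show "\<exists>y\<in>?Y. dist x y \<le> 2 * \<delta>" by blast
    qed
    finally show "dR ?X ?Y \<le> 2 * \<delta>" .
  qed
qed

lemma lattice_ball_finite:
  fixes B :: "'a::euclidean_space set"
  assumes "independent B" "card B = DIM('a)"
  shows "finite (lattice B \<inter> cball 0 R)"
proof (cases "R \<ge> 0")
  case True then show ?thesis using lattice_ball[OF assms] by blast
next
  case False then have "cball (0::'a) R = {}" by auto
  then show ?thesis by simp
qed

definition Ncount :: "'a::euclidean_space set \<Rightarrow> real \<Rightarrow> nat" where
  "Ncount B R = card (lattice B \<inter> cball 0 R)"

definition mpart :: "'a::euclidean_space set \<Rightarrow> 'a set \<Rightarrow> 'a \<Rightarrow> 'a" where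
  "mpart B M x = (THE p. p \<in> M \<and> x - p \<in> lattice B)"

definition cls :: "'a::euclidean_space set \<Rightarrow> 'a set \<Rightarrow> real \<Rightarrow> 'a \<Rightarrow> 'a set" where
  "cls S M \<alpha> p = {q \<in> M. alpha_equiv S \<alpha> p q}"

locale per =
  fixes B M S :: "'a::euclidean_space set"
  assumes pr: "periodic_rep B M S"
begin

lemma indep: "independent B" and cardB: "card B = DIM('a)" and finB: "finite B"
  and finM: "finite M" and neM: "M \<noteq> {}" and McU: "M \<subseteq> unit_cell B"
  and Sdef: "S = {p + l | p l. p \<in> M \<and> l \<in> lattice B}"
  using pr basis_facts[of B] unfolding periodic_rep_def by auto

lemma memS: "x \<in> S \<longleftrightarrow> (\<exists>p\<in>M. \<exists>l\<in>lattice B. x = p + l)"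
  unfolding Sdef by blast

lemma S_translate:
  assumes "l \<in> lattice B" shows "x + l \<in> S \<longleftrightarrow> x \<in> S"
proof
  assume "x + l \<in> S"
  then obtain p l' where "p \<in> M" "l' \<in> lattice B" "x + l = p + l'" using memS by blast
  then have "x = p + (l' - l)" "l' - l \<in> lattice B" using lattice_diff assms by (auto simp: algebra_simps)
  then show "x \<in> S" using memS \<open>p \<in> M\<close> by blast
next
  assume "x \<in> S"
  then obtain p l' where "p \<in> M" "l' \<in> lattice B" "x = p + l'" using memS by blast
  then have "x + l = p + (l' + l)" "l' + l \<in> lattice B" using lattice_add assms by (auto simp: algebra_simps)
  then show "x + l \<in> S" using memS \<open>p \<in> M\<close> by blast
qed

lemma equiv_translate:
  assumes "l \<in> lattice B" shows "alpha_equiv S \<alpha> (x + l) x"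
proof -
  let ?f = "\<lambda>t. t - l"
  have "isometry ?f" unfolding isometry_def by (simp add: dist_norm)
  moreover have "?f ` cluster S (x + l) \<alpha> = cluster S x \<alpha>"
  proof
    show "?f ` cluster S (x + l) \<alpha> \<subseteq> cluster S x \<alpha>"
    proof
      fix y assume "y \<in> ?f ` cluster S (x + l) \<alpha>"
      then obtain t where t: "t \<in> S" "dist (x + l) t \<le> \<alpha>" "y = t - l" unfolding cluster_def by auto
      have "y + l \<in> S" using t by simp
      then have "y \<in> S" using S_translate[OF assms] by blast
      moreover have "dist x y \<le> \<alpha>"
      proof -
        have e: "x - y = (x + l) - t" using t(3) by simp
        have "dist x y = dist (x + l) t" unfolding dist_norm e ..
        then show ?thesis using t(2) by simp
      qed
      ultimately show "y \<in> cluster S x \<alpha>" unfolding cluster_def by auto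
    qed
    show "cluster S x \<alpha> \<subseteq> ?f ` cluster S (x + l) \<alpha>"
    proof
      fix y assume "y \<in> cluster S x \<alpha>"
      then have y: "y \<in> S" "dist x y \<le> \<alpha>" unfolding cluster_def by auto
      have "y + l \<in> S" using y S_translate[OF assms] by blast
      moreover have "dist (x + l) (y + l) \<le> \<alpha>" using y by (simp add: dist_norm)
      ultimately have "y + l \<in> cluster S (x + l) \<alpha>" unfolding cluster_def by auto
      then show "y \<in> ?f ` cluster S (x + l) \<alpha>" by (rule rev_image_eqI) simp
    qed
  qed
  moreover have "?f (x + l) = x" by simp
  ultimately show ?thesis unfolding alpha_equiv_def by blast
qed

lemma decomp_inj:
  assumes "p \<in> M" "p' \<in> M" "l \<in> lattice B" "l' \<in> lattice B" "p + l = p' + l'"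
  shows "p = p' \<and> l = l'"
proof -
  have "p = p'" using decomp_unique[OF indep finB _ _ assms(3,4,5)] assms(1,2) McU by blast
  then show ?thesis using assms(5) by simp
qed

lemma mpart:
  assumes "p \<in> M" "l \<in> lattice B" shows "mpart B M (p + l) = p"
  unfolding mpart_def
proof (rule the_equality)
  show "p \<in> M \<and> p + l - p \<in> lattice B" using assms by simp
  fix p' assume "p' \<in> M \<and> p + l - p' \<in> lattice B"
  then have "p' \<in> M" "p + l = p' + (p + l - p')" "p + l - p' \<in> lattice B" by auto
  then show "p' = p" using decomp_inj[OF assms(1) _ assms(2)] by metis
qed

lemma mpart_mem:
  assumes "x \<in> S" shows "mpart B M x \<in> M" "x - mpart B M x \<in> lattice B"
proof -
  obtain p l where "p \<in> M" "l \<in> lattice B" "x = p + l" using assms memS by blast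
  then show "mpart B M x \<in> M" "x - mpart B M x \<in> lattice B" using mpart by auto
qed

lemma equiv_mpart:
  assumes "x \<in> S" shows "alpha_equiv S \<alpha> x (mpart B M x)"
  using equiv_translate[OF mpart_mem(2)[OF assms], of \<alpha> "mpart B M x"] by simp

lemma M_bound: "\<exists>d\<ge>0. \<forall>p\<in>M. norm p \<le> d"
proof -
  have "\<forall>p\<in>M. norm p \<le> (\<Sum>q\<in>M. norm q)" using finM by (intro ballI member_le_sum) auto
  moreover have "(\<Sum>q\<in>M. norm q) \<ge> 0" by (simp add: sum_nonneg)
  ultimately show ?thesis by blast
qed

lemma MsubS: "M \<subseteq> S"
  using memS lattice_zero by fastforce

lemma S_ball_sub:
  assumes "\<forall>p\<in>M. norm p \<le> d"
  shows "S \<inter> cball 0 R \<subseteq> (\<lambda>(p, l). p + l) ` (M \<times> (lattice B \<inter> cball 0 (R + d)))"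
proof
  fix x assume x: "x \<in> S \<inter> cball 0 R"
  then obtain p l where pl: "p \<in> M" "l \<in> lattice B" "x = p + l" using memS by blast
  have "norm l \<le> norm x + norm p" using pl(3) norm_triangle_ineq4[of x p] by simp
  then have "norm l \<le> R + d" using x assms pl(1) by fastforce
  then have "(p, l) \<in> M \<times> (lattice B \<inter> cball 0 (R + d))" using pl by auto
  then show "x \<in> (\<lambda>(p, l). p + l) ` (M \<times> (lattice B \<inter> cball 0 (R + d)))"
    using pl(3) by (metis (no_types, lifting) case_prod_conv image_eqI)
qed

lemma locfin: "locfin S"
  unfolding locfin_def
proof (intro allI)
  fix c :: 'a and r :: real
  obtain d where d: "d \<ge> 0" "\<forall>p\<in>M. norm p \<le> d" using M_bound by blast
  have "S \<inter> cball c r \<subseteq> S \<inter> cball 0 (norm c + r)"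
    by (auto simp: dist_norm) (metis norm_minus_commute norm_triangle_sub add.commute add_mono order_trans order_refl)
  also have "\<dots> \<subseteq> (\<lambda>(p, l). p + l) ` (M \<times> (lattice B \<inter> cball 0 (norm c + r + d)))"
    by (rule S_ball_sub[OF d(2)])
  finally show "finite (S \<inter> cball c r)"
    using finM lattice_ball_finite[OF indep cardB] by (meson finite_SigmaI finite_imageI finite_subset)
qed

lemma card_S_ball:
  assumes "\<forall>p\<in>M. norm p \<le> d"
  shows "card (S \<inter> cball 0 R) \<le> card M * Ncount B (R + d)"
proof -
  have fin: "finite (M \<times> (lattice B \<inter> cball 0 (R + d)))"
    using finM lattice_ball_finite[OF indep cardB] by blast
  have "card (S \<inter> cball 0 R) \<le> card ((\<lambda>(p, l). p + l) ` (M \<times> (lattice B \<inter> cball 0 (R + d))))"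
    using S_ball_sub[OF assms] fin by (intro card_mono) auto
  also have "\<dots> \<le> card (M \<times> (lattice B \<inter> cball 0 (R + d)))" using fin by (rule card_image_le)
  also have "\<dots> = card M * Ncount B (R + d)" unfolding Ncount_def by (simp add: card_cartesian_product)
  finally show ?thesis .
qed

lemma inj_decomp: "inj_on (\<lambda>(p, l). p + l) (M \<times> lattice B)"
  unfolding inj_on_def using decomp_inj by auto

lemma cls_mem: "p \<in> M \<Longrightarrow> p \<in> cls S M \<alpha> p"
  unfolding cls_def using alpha_equiv_refl by auto

lemma cls_eq:
  assumes "p \<in> M" "K \<in> iso_classes S M \<alpha>" shows "p \<in> K \<longleftrightarrow> cls S M \<alpha> p = K"
proof -
  obtain p0 where p0: "p0 \<in> M" "K = cls S M \<alpha> p0" using assms(2) unfolding iso_classes_def cls_def by blast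
  show ?thesis
  proof
    assume "p \<in> K"
    then have e: "alpha_equiv S \<alpha> p0 p" using p0 unfolding cls_def by auto
    show "cls S M \<alpha> p = K" unfolding p0(2) cls_def
      using e alpha_equiv_sym alpha_equiv_trans by blast
  next
    assume "cls S M \<alpha> p = K" then show "p \<in> K" using cls_mem[OF assms(1)] by auto
  qed
qed

lemma classes_eq: "iso_classes S M \<alpha> = cls S M \<alpha> ` M"
  unfolding iso_classes_def cls_def ..

lemma classes_finite: "finite (iso_classes S M \<alpha>)"
  using finM classes_eq by simp

lemma class_sub: "K \<in> iso_classes S M \<alpha> \<Longrightarrow> K \<subseteq> M"
  unfolding iso_classes_def by auto

lemma class_rep_mem: "K \<in> iso_classes S M \<alpha> \<Longrightarrow> class_rep K \<in> K"
  unfolding class_rep_def classes_eq by (metis cls_mem imageE someI)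

lemma sum_class_card: "(\<Sum>K\<in>iso_classes S M \<alpha>. card K) = card M"
proof -
  have U: "\<Union> (iso_classes S M \<alpha>) = M" using cls_mem class_sub classes_eq by blast
  have "card (\<Union> (iso_classes S M \<alpha>)) = (\<Sum>K\<in>iso_classes S M \<alpha>. card K)"
  proof (rule card_Union_disjoint)
    show "pairwise disjnt (iso_classes S M \<alpha>)"
      unfolding pairwise_def disjnt_def
      using cls_eq class_sub by blast
    show "\<And>K. K \<in> iso_classes S M \<alpha> \<Longrightarrow> finite K" using class_sub finM finite_subset by blast
  qed
  then show ?thesis using U by simp
qed

lemma sum_weights: "(\<Sum>K\<in>iso_classes S M \<alpha>. iso_weight M K) = 1"
proof -
  have "card M > 0" using finM neM by (simp add: card_gt_0_iff)
  have "(\<Sum>K\<in>iso_classes S M \<alpha>. iso_weight M K) = (\<Sum>K\<in>iso_classes S M \<alpha>. real (card K)) / real (card M)"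
    unfolding iso_weight_def by (simp add: sum_divide_distrib)
  also have "\<dots> = 1" using sum_class_card[of \<alpha>] \<open>card M > 0\<close> by (metis of_nat_sum divide_self_if of_nat_0_less_iff less_irrefl)
  finally show ?thesis .
qed

end

lemma exp_beats_poly:
  fixes q A :: real and d :: nat
  assumes "q > 1" "A > 0"
  shows "\<exists>k::nat. k \<ge> 1 \<and> (A * (real k + 1)) ^ d < q ^ k"
proof -
  define s where "s = root (Suc d) q"
  have s1: "s > 1" unfolding s_def using assms(1) by simp
  have sq: "s ^ Suc d = q" unfolding s_def using assms(1) real_root_pow_pos2[of "Suc d" q] by linarith
  define h where "h = s - 1"
  have h0: "h > 0" using s1 h_def by simp
  define k where "k = nat \<lceil>(2 * A) ^ d / h ^ Suc d\<rceil> + 1"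
  have k1: "k \<ge> 1" unfolding k_def by simp
  have "real k > (2 * A) ^ d / h ^ Suc d" unfolding k_def by linarith
  then have kh: "real k * h ^ Suc d > (2 * A) ^ d" using h0 by (simp add: field_simps)
  have bern: "1 + real k * h \<le> s ^ k"
    using Bernoulli_inequality[of h k] h0 unfolding h_def by simp
  have "(A * (real k + 1)) ^ d \<le> (2 * A * real k) ^ d"
    using k1 assms(2) by (intro power_mono) auto
  also have "\<dots> = real k ^ d * (2 * A) ^ d" by (simp add: power_mult_distrib)
  also have "\<dots> < real k ^ d * (real k * h ^ Suc d)"
    using kh k1 by (intro mult_strict_left_mono) auto
  also have "\<dots> = (real k * h) ^ Suc d" by (simp add: power_mult_distrib)
  also have "\<dots> \<le> (s ^ k) ^ Suc d" using bern h0 by (intro power_mono) auto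
  also have "\<dots> = q ^ k" using sq by (metis power_mult power_mult_distrib mult.commute)
  finally show ?thesis using k1 by blast
qed

lemma subexp:
  fixes N :: "real \<Rightarrow> nat" and K c \<eta> :: real and d :: nat
  assumes mono: "\<And>r s. r \<le> s \<Longrightarrow> N r \<le> N s"
    and N0: "N 0 \<ge> 1"
    and poly: "\<And>R. R \<ge> 0 \<Longrightarrow> N R \<le> (2 * nat \<lceil>K * R\<rceil> + 1) ^ d"
    and K: "K > 0" and c: "c > 0" and \<eta>: "\<eta> > 0"
  shows "\<exists>R\<ge>0. real (N (R + c)) * (1 - \<eta>) \<le> real (N R)"
proof (rule ccontr)
  assume H: "\<not> ?thesis"
  then have H': "\<And>R. R \<ge> 0 \<Longrightarrow> real (N R) < real (N (R + c)) * (1 - \<eta>)" by force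
  have \<eta>1: "\<eta> < 1"
  proof (rule ccontr)
    assume "\<not> \<eta> < 1"
    then have "real (N (0 + c)) * (1 - \<eta>) \<le> 0" by (simp add: mult_nonneg_nonpos)
    then show False using H'[of 0] by simp
  qed
  define q where "q = 1 / (1 - \<eta>)"
  have q1: "q > 1" unfolding q_def using \<eta> \<eta>1 by simp
  have step: "real (N (R + c)) \<ge> q * real (N R)" if "R \<ge> 0" for R
  proof -
    have "real (N R) < real (N (R + c)) * (1 - \<eta>)" using H' that .
    then have "real (N R) / (1 - \<eta>) \<le> real (N (R + c))" using \<eta>1 by (simp add: field_simps)
    then show ?thesis unfolding q_def by simp
  qed
  have grow: "real (N (real k * c)) \<ge> q ^ k" for k :: nat
  proof (induction k)
    case 0 then show ?case using N0 by simp
  next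
    case (Suc k)
    have "q ^ Suc k = q * q ^ k" by simp
    also have "\<dots> \<le> q * real (N (real k * c))" using Suc q1 by simp
    also have "\<dots> \<le> real (N (real k * c + c))" using step[of "real k * c"] c by simp
    also have "real k * c + c = real (Suc k) * c" by (simp add: algebra_simps)
    finally show ?case .
  qed
  define A where "A = 2 * K * c + 3"
  have "K * c > 0" using K c by simp
  then have A0: "A > 0" unfolding A_def by simp
  obtain k :: nat where k: "k \<ge> 1" "(A * (real k + 1)) ^ d < q ^ k"
    using exp_beats_poly[OF q1 A0] by blast
  have "real (N (real k * c)) \<le> real ((2 * nat \<lceil>K * (real k * c)\<rceil> + 1) ^ d)"
    using poly[of "real k * c"] c by (simp del: of_nat_power)
  also have "\<dots> = (2 * real (nat \<lceil>K * (real k * c)\<rceil>) + 1) ^ d" by (simp add: add.commute)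
  also have "\<dots> \<le> (A * (real k + 1)) ^ d"
  proof (rule power_mono)
    have "K * (real k * c) \<ge> 0" using K c by simp
    then have "real (nat \<lceil>K * (real k * c)\<rceil>) \<le> K * (real k * c) + 1" by linarith
    then have "2 * real (nat \<lceil>K * (real k * c)\<rceil>) + 1 \<le> 2 * K * c * real k + 3" by (simp add: algebra_simps)
    also have "\<dots> \<le> A * (real k + 1)" unfolding A_def using K c by (simp add: algebra_simps)
    finally show "2 * real (nat \<lceil>K * (real k * c)\<rceil>) + 1 \<le> A * (real k + 1)" .
  qed simp
  finally have "q ^ k \<le> (A * (real k + 1)) ^ d" using grow[of k] by linarith
  then show False using k(2) by simp
qed

lemma fiber_sum:
  assumes "finite A" "finite I" "h ` A \<subseteq> I"
  shows "(\<Sum>i\<in>I. card {a\<in>A. h a = i}) = card A"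
proof -
  have "(\<Sum>i\<in>I. sum (\<lambda>_. 1::nat) {a. a \<in> A \<and> h a = i}) = sum (\<lambda>_. 1) A"
    by (rule sum.group[OF assms])
  then show ?thesis by simp
qed

locale two = PS: per BS MotS S + PQ: per BQ MotQ Q
  for BS MotS S BQ MotQ Q :: "'a::euclidean_space set" +
  fixes g :: "'a \<Rightarrow> 'a" and \<delta> \<alpha> :: real
  assumes bij: "bij_betw g S Q" and disp: "\<forall>x\<in>S. dist x (g x) \<le> \<delta>"
    and \<delta>0: "\<delta> > 0" and \<alpha>0: "\<alpha> \<ge> 0"
begin

definition "dS = (\<Sum>q\<in>MotS. norm q)"
definition "dQ = (\<Sum>q\<in>MotQ. norm q)"
definition "X R = MotS \<times> (lattice BS \<inter> cball 0 R)"
definition "clsQ q = cls Q MotQ \<alpha> (mpart BQ MotQ q)"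
definition "phi x = g (fst x + snd x)"

lemma dS: "dS \<ge> 0" "\<forall>p\<in>MotS. norm p \<le> dS"
  unfolding dS_def using PS.finM by (auto intro: sum_nonneg member_le_sum)
lemma dQ: "dQ \<ge> 0" "\<forall>p\<in>MotQ. norm p \<le> dQ"
  unfolding dQ_def using PQ.finM by (auto intro: sum_nonneg member_le_sum)

lemma finX: "finite (X R)"
  unfolding X_def using PS.finM lattice_ball_finite[OF PS.indep PS.cardB] by blast

lemma X_S: "x \<in> X R \<Longrightarrow> fst x + snd x \<in> S"
proof -
  assume "x \<in> X R"
  then have "fst x \<in> MotS" "snd x \<in> lattice BS" unfolding X_def by auto
  then show ?thesis unfolding PS.memS by blast
qed

lemma phi_Q: "x \<in> X R \<Longrightarrow> phi x \<in> Q"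
  unfolding phi_def using X_S bij bij_betwE by blast

lemma clsQ_in: "q \<in> Q \<Longrightarrow> clsQ q \<in> iso_classes Q MotQ \<alpha>"
  unfolding clsQ_def PQ.classes_eq using PQ.mpart_mem(1) by blast

lemma clsS_in: "p \<in> MotS \<Longrightarrow> cls S MotS \<alpha> p \<in> iso_classes S MotS \<alpha>"
  unfolding PS.classes_eq by blast

definition "cnt R K L = card {x \<in> X R. cls S MotS \<alpha> (fst x) = K \<and> clsQ (phi x) = L}"

lemma rows_count:
  assumes "K \<in> iso_classes S MotS \<alpha>"
  shows "(\<Sum>L\<in>iso_classes Q MotQ \<alpha>. cnt R K L) = card K * Ncount BS R"
proof -
  let ?A = "{x \<in> X R. cls S MotS \<alpha> (fst x) = K}"
  have "(\<Sum>L\<in>iso_classes Q MotQ \<alpha>. card {a\<in>?A. clsQ (phi a) = L}) = card ?A"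
    by (rule fiber_sum) (use finX phi_Q clsQ_in PQ.classes_finite in auto)
  moreover have "{a\<in>?A. clsQ (phi a) = L} = {x \<in> X R. cls S MotS \<alpha> (fst x) = K \<and> clsQ (phi x) = L}" for L
    by auto
  moreover have "?A = K \<times> (lattice BS \<inter> cball 0 R)"
    unfolding X_def using PS.cls_eq[OF _ assms] PS.class_sub[OF assms] by auto
  ultimately show ?thesis unfolding cnt_def Ncount_def by (simp add: card_cartesian_product)
qed

lemma cols_count:
  "(\<Sum>K\<in>iso_classes S MotS \<alpha>. cnt R K L) = card {x \<in> X R. clsQ (phi x) = L}"
proof -
  let ?A = "{x \<in> X R. clsQ (phi x) = L}"
  have "(\<Sum>K\<in>iso_classes S MotS \<alpha>. card {a\<in>?A. cls S MotS \<alpha> (fst a) = K}) = card ?A"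
    by (rule fiber_sum) (use finX clsS_in PS.classes_finite in \<open>auto simp: X_def\<close>)
  moreover have "{a\<in>?A. cls S MotS \<alpha> (fst a) = K} = {x \<in> X R. cls S MotS \<alpha> (fst x) = K \<and> clsQ (phi x) = L}" for K
    by auto
  ultimately show ?thesis unfolding cnt_def by simp
qed

lemma inj_phi: "inj_on phi (X R)"
proof (rule inj_onI)
  fix x y assume xy: "x \<in> X R" "y \<in> X R" "phi x = phi y"
  have "fst x + snd x = fst y + snd y"
    using xy X_S bij unfolding phi_def bij_betw_def inj_on_def by blast
  moreover have "fst x \<in> MotS" "fst y \<in> MotS" "snd x \<in> lattice BS" "snd y \<in> lattice BS"
    using xy unfolding X_def by auto
  ultimately show "x = y" using PS.decomp_inj by (metis prod.expand)
qed

lemma col_bound: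
  assumes "L \<in> iso_classes Q MotQ \<alpha>"
  shows "card {x \<in> X R. clsQ (phi x) = L} \<le> card L * Ncount BQ (R + dS + \<delta> + dQ)"
proof -
  let ?T = "(\<lambda>(p, l). p + l) ` (L \<times> (lattice BQ \<inter> cball 0 (R + dS + \<delta> + dQ)))"
  have finT: "finite (L \<times> (lattice BQ \<inter> cball 0 (R + dS + \<delta> + dQ)))"
    using PQ.class_sub[OF assms] PQ.finM lattice_ball_finite[OF PQ.indep PQ.cardB]
    by (meson finite_SigmaI finite_subset)
  have sub: "phi ` {x \<in> X R. clsQ (phi x) = L} \<subseteq> ?T"
  proof
    fix q assume "q \<in> phi ` {x \<in> X R. clsQ (phi x) = L}"
    then obtain x where x: "x \<in> X R" "clsQ (phi x) = L" "q = phi x" by blast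
    have qQ: "q \<in> Q" using x phi_Q by simp
    have nx: "norm (fst x + snd x) \<le> R + dS"
    proof -
      have "norm (fst x + snd x) \<le> norm (fst x) + norm (snd x)" by (rule norm_triangle_ineq)
      moreover have "norm (fst x) \<le> dS" "norm (snd x) \<le> R" using x(1) dS unfolding X_def by auto
      ultimately show ?thesis by linarith
    qed
    have "dist (fst x + snd x) q \<le> \<delta>" using disp X_S[OF x(1)] x(3) unfolding phi_def by blast
    then have nq: "norm q \<le> R + dS + \<delta>"
      using nx norm_triangle_ineq2[of q "fst x + snd x"] by (simp add: dist_norm norm_minus_commute)
    define m where "m = mpart BQ MotQ q"
    have m: "m \<in> MotQ" "q - m \<in> lattice BQ" using PQ.mpart_mem[OF qQ] m_def by auto
    have "m \<in> L" using PQ.cls_eq[OF m(1) assms] x(2) x(3) unfolding clsQ_def m_def by simp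
    moreover have "norm (q - m) \<le> R + dS + \<delta> + dQ"
      using norm_triangle_ineq4[of q m] nq dQ m(1) by fastforce
    ultimately have "(m, q - m) \<in> L \<times> (lattice BQ \<inter> cball 0 (R + dS + \<delta> + dQ))" using m by auto
    then show "q \<in> ?T" by (rule rev_image_eqI) simp
  qed
  have "card {x \<in> X R. clsQ (phi x) = L} = card (phi ` {x \<in> X R. clsQ (phi x) = L})"
    using inj_phi by (intro card_image[symmetric]) (auto intro: inj_on_subset)
  also have "\<dots> \<le> card ?T" using sub finT by (intro card_mono) auto
  also have "\<dots> \<le> card (L \<times> (lattice BQ \<inter> cball 0 (R + dS + \<delta> + dQ)))" using finT by (rule card_image_le)
  also have "\<dots> = card L * Ncount BQ (R + dS + \<delta> + dQ)" unfolding Ncount_def by (simp add: card_cartesian_product)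
  finally show ?thesis .
qed

lemma mass:
  "card MotQ * Ncount BQ r \<le> card MotS * Ncount BS (r + dQ + \<delta> + dS)"
proof -
  let ?P = "MotQ \<times> (lattice BQ \<inter> cball 0 r)"
  have finP: "finite ?P" using PQ.finM lattice_ball_finite[OF PQ.indep PQ.cardB] by blast
  have "card MotQ * Ncount BQ r = card ?P" unfolding Ncount_def by (simp add: card_cartesian_product)
  also have "\<dots> = card ((\<lambda>(p, l). p + l) ` ?P)"
    using PQ.inj_decomp by (intro card_image[symmetric]) (auto intro: inj_on_subset)
  also have "\<dots> \<le> card (Q \<inter> cball 0 (r + dQ))"
  proof (rule card_mono)
    show "finite (Q \<inter> cball 0 (r + dQ))" using PQ.locfin unfolding locfin_def by blast
    show "(\<lambda>(p, l). p + l) ` ?P \<subseteq> Q \<inter> cball 0 (r + dQ)"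
    proof
      fix y assume "y \<in> (\<lambda>(p, l). p + l) ` ?P"
      then obtain p l where pl: "p \<in> MotQ" "l \<in> lattice BQ" "norm l \<le> r" "y = p + l" by auto
      have "y \<in> Q" using pl PQ.memS by blast
      moreover have "norm y \<le> r + dQ" using pl dQ norm_triangle_ineq[of p l] by fastforce
      ultimately show "y \<in> Q \<inter> cball 0 (r + dQ)" by auto
    qed
  qed
  also have "\<dots> \<le> card (S \<inter> cball 0 (r + dQ + \<delta>))"
  proof -
    have "Q \<inter> cball 0 (r + dQ) \<subseteq> g ` (S \<inter> cball 0 (r + dQ + \<delta>))"
    proof
      fix q assume q: "q \<in> Q \<inter> cball 0 (r + dQ)"
      then obtain s where s: "s \<in> S" "q = g s" using bij unfolding bij_betw_def by auto
      have "dist s q \<le> \<delta>" using disp s by auto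
      then have "norm s \<le> r + dQ + \<delta>" using q norm_triangle_ineq2[of s q] by (simp add: dist_norm)
      then show "q \<in> g ` (S \<inter> cball 0 (r + dQ + \<delta>))" using s by auto
    qed
    moreover have "finite (S \<inter> cball 0 (r + dQ + \<delta>))" using PS.locfin unfolding locfin_def by blast
    ultimately show ?thesis by (meson card_image_le card_mono finite_imageI order_trans)
  qed
  also have "\<dots> \<le> card MotS * Ncount BS (r + dQ + \<delta> + dS)" by (rule PS.card_S_ball[OF dS(2)])
  finally show ?thesis .
qed

end

context two
begin

lemma dC_pos_pair:
  assumes "cnt R K L > 0" "K \<in> iso_classes S MotS \<alpha>" "L \<in> iso_classes Q MotQ \<alpha>"
  shows "dC S (class_rep K) Q (class_rep L) \<alpha> \<le> 2 * \<delta>"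
proof -
  have "{x \<in> X R. cls S MotS \<alpha> (fst x) = K \<and> clsQ (phi x) = L} \<noteq> {}"
    using assms(1) unfolding cnt_def by (metis card.empty less_irrefl)
  then obtain x where x: "x \<in> X R" "cls S MotS \<alpha> (fst x) = K" "clsQ (phi x) = L" by blast
  define p where "p = fst x"
  define l where "l = snd x"
  have p: "p \<in> MotS" "l \<in> lattice BS" using x(1) unfolding X_def p_def l_def by auto
  have xS: "p + l \<in> S" using X_S[OF x(1)] p_def l_def by simp
  define q where "q = g (p + l)"
  have qQ: "q \<in> Q" using xS bij bij_betwE q_def by blast
  have e1: "alpha_equiv S \<alpha> (p + l) p" using PS.equiv_translate[OF p(2)] .
  have "class_rep K \<in> cls S MotS \<alpha> p" using PS.class_rep_mem[OF assms(2)] x(2) p_def by simp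
  then have e2: "alpha_equiv S \<alpha> p (class_rep K)" unfolding cls_def by auto
  have eS: "alpha_equiv S \<alpha> (p + l) (class_rep K)" using alpha_equiv_trans[OF e1 e2] .
  have f1: "alpha_equiv Q \<alpha> q (mpart BQ MotQ q)" using PQ.equiv_mpart[OF qQ] .
  have "class_rep L \<in> cls Q MotQ \<alpha> (mpart BQ MotQ q)"
    using PQ.class_rep_mem[OF assms(3)] x(3) unfolding clsQ_def phi_def q_def p_def l_def by simp
  then have f2: "alpha_equiv Q \<alpha> (mpart BQ MotQ q) (class_rep L)" unfolding cls_def by auto
  have eQ: "alpha_equiv Q \<alpha> q (class_rep L)" using alpha_equiv_trans[OF f1 f2] .
  have "dC S (class_rep K) Q (class_rep L) \<alpha> = dC S (p + l) Q q \<alpha>"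
    using dC_inv_left[OF eS, of Q q] dC_inv_right[OF eQ, of S "class_rep K"] by simp
  also have "\<dots> \<le> 2 * \<delta>" unfolding q_def
    by (rule dC_bij_bound[OF PS.locfin PQ.locfin bij disp xS \<alpha>0])
  finally show ?thesis .
qed

lemma emd_feasible_nonneg:
  assumes "\<forall>K\<in>iso_classes S MotS \<alpha>. \<forall>L\<in>iso_classes Q MotQ \<alpha>. F K L \<in> {0..1}"
  shows "0 \<le> (\<Sum>K\<in>iso_classes S MotS \<alpha>. \<Sum>L\<in>iso_classes Q MotQ \<alpha>.
          F K L * dC S (class_rep K) Q (class_rep L) \<alpha>)"
proof (intro sum_nonneg mult_nonneg_nonneg)
  fix K L assume KL: "K \<in> iso_classes S MotS \<alpha>" "L \<in> iso_classes Q MotQ \<alpha>"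
  show "0 \<le> F K L" using assms KL by auto
  have "class_rep K \<in> S" using PS.class_rep_mem[OF KL(1)] PS.class_sub[OF KL(1)] PS.MsubS by blast
  moreover have "class_rep L \<in> Q" using PQ.class_rep_mem[OF KL(2)] PQ.class_sub[OF KL(2)] PQ.MsubS by blast
  ultimately show "0 \<le> dC S (class_rep K) Q (class_rep L) \<alpha>"
    using dC_bounds(1)[OF PS.locfin PQ.locfin _ _ \<alpha>0] by blast
qed

lemma emd_le_cost:
  assumes "\<forall>K\<in>iso_classes S MotS \<alpha>. \<forall>L\<in>iso_classes Q MotQ \<alpha>. F K L \<in> {0..1}"
    "\<forall>K\<in>iso_classes S MotS \<alpha>. (\<Sum>L\<in>iso_classes Q MotQ \<alpha>. F K L) \<le> iso_weight MotS K"
    "\<forall>L\<in>iso_classes Q MotQ \<alpha>. (\<Sum>K\<in>iso_classes S MotS \<alpha>. F K L) \<le> iso_weight MotQ L"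
    "(\<Sum>K\<in>iso_classes S MotS \<alpha>. \<Sum>L\<in>iso_classes Q MotQ \<alpha>. F K L) = 1"
  shows "EMD_iso S MotS Q MotQ \<alpha> \<le> (\<Sum>K\<in>iso_classes S MotS \<alpha>. \<Sum>L\<in>iso_classes Q MotQ \<alpha>.
          F K L * dC S (class_rep K) Q (class_rep L) \<alpha>)"
  unfolding EMD_iso_def
proof (rule cInf_lower)
  show "(\<Sum>K\<in>iso_classes S MotS \<alpha>. \<Sum>L\<in>iso_classes Q MotQ \<alpha>.
          F K L * dC S (class_rep K) Q (class_rep L) \<alpha>) \<in> {(\<Sum>K\<in>iso_classes S MotS \<alpha>. \<Sum>L\<in>iso_classes Q MotQ \<alpha>.
          F K L * dC S (class_rep K) Q (class_rep L) \<alpha>) | F.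
        (\<forall>K\<in>iso_classes S MotS \<alpha>. \<forall>L\<in>iso_classes Q MotQ \<alpha>. F K L \<in> {0..1}) \<and>
        (\<forall>K\<in>iso_classes S MotS \<alpha>. (\<Sum>L\<in>iso_classes Q MotQ \<alpha>. F K L) \<le> iso_weight MotS K) \<and>
        (\<forall>L\<in>iso_classes Q MotQ \<alpha>. (\<Sum>K\<in>iso_classes S MotS \<alpha>. F K L) \<le> iso_weight MotQ L) \<and>
        (\<Sum>K\<in>iso_classes S MotS \<alpha>. \<Sum>L\<in>iso_classes Q MotQ \<alpha>. F K L) = 1}"
    using assms by blast
  show "bdd_below {(\<Sum>K\<in>iso_classes S MotS \<alpha>. \<Sum>L\<in>iso_classes Q MotQ \<alpha>.
          F K L * dC S (class_rep K) Q (class_rep L) \<alpha>) | F.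
        (\<forall>K\<in>iso_classes S MotS \<alpha>. \<forall>L\<in>iso_classes Q MotQ \<alpha>. F K L \<in> {0..1}) \<and>
        (\<forall>K\<in>iso_classes S MotS \<alpha>. (\<Sum>L\<in>iso_classes Q MotQ \<alpha>. F K L) \<le> iso_weight MotS K) \<and>
        (\<forall>L\<in>iso_classes Q MotQ \<alpha>. (\<Sum>K\<in>iso_classes S MotS \<alpha>. F K L) \<le> iso_weight MotQ L) \<and>
        (\<Sum>K\<in>iso_classes S MotS \<alpha>. \<Sum>L\<in>iso_classes Q MotQ \<alpha>. F K L) = 1}"
    by (rule bdd_belowI[of _ 0]) (use emd_feasible_nonneg in blast)
qed

end

context two
begin

lemma NS_mono: "r \<le> s \<Longrightarrow> Ncount BS r \<le> Ncount BS s"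
  unfolding Ncount_def using lattice_ball_finite[OF PS.indep PS.cardB]
  by (intro card_mono) auto

lemma NS_pos: "r \<ge> 0 \<Longrightarrow> Ncount BS r \<ge> 1"
proof -
  assume r: "r \<ge> 0"
  have "0 \<in> lattice BS \<inter> cball 0 r" using lattice_zero r by auto
  then have "lattice BS \<inter> cball 0 r \<noteq> {}" by blast
  then show ?thesis unfolding Ncount_def using lattice_ball_finite[OF PS.indep PS.cardB]
    by (simp add: Suc_le_eq card_gt_0_iff)
qed

lemma emd_eta:
  assumes \<eta>: "0 < \<eta>" "\<eta> < 1"
  shows "EMD_iso S MotS Q MotQ \<alpha> \<le> 2 * \<delta> + \<alpha> * \<eta>"
proof -
  define c where "c = dS + \<delta> + dQ"
  have c0: "c > 0" unfolding c_def using dS dQ \<delta>0 by simp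
  obtain KK where KK: "KK > 0" "\<forall>R\<ge>0. finite (lattice BS \<inter> cball 0 R) \<and>
            card (lattice BS \<inter> cball 0 R) \<le> (2 * nat \<lceil>KK * R\<rceil> + 1) ^ DIM('a)"
    using lattice_ball[OF PS.indep PS.cardB] by blast
  obtain R where R: "R \<ge> 0" "real (Ncount BS (R + 2 * c)) * (1 - \<eta>) \<le> real (Ncount BS R)"
  proof -
    have N0: "Ncount BS 0 \<ge> 1" using NS_pos by simp
    have poly: "\<And>R. R \<ge> 0 \<Longrightarrow> Ncount BS R \<le> (2 * nat \<lceil>KK * R\<rceil> + 1) ^ DIM('a)"
      using KK unfolding Ncount_def by blast
    have "\<exists>R\<ge>0. real (Ncount BS (R + 2 * c)) * (1 - \<eta>) \<le> real (Ncount BS R)"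
      by (rule subexp[where N="Ncount BS" and K=KK and c="2 * c" and \<eta>=\<eta> and d="DIM('a)"])
         (use NS_mono N0 poly KK c0 \<eta> in auto)
    then show ?thesis using that by blast
  qed
  let ?CS = "iso_classes S MotS \<alpha>" and ?CQ = "iso_classes Q MotQ \<alpha>"
  define NSR where "NSR = real (Ncount BS R)"
  define NS2 where "NS2 = real (Ncount BS (R + 2 * c))"
  define mS where "mS = real (card MotS)"
  define mQ where "mQ = real (card MotQ)"
  have NS2pos: "NS2 > 0" unfolding NS2_def using NS_pos[of "R + 2 * c"] R(1) c0 by simp
  have NSRpos: "NSR > 0" unfolding NSR_def using NS_pos[of R] R(1) by simp
  have NSRle: "NSR \<le> NS2" unfolding NSR_def NS2_def using NS_mono[of R "R + 2 * c"] c0 by simp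
  have mSpos: "mS > 0" unfolding mS_def using PS.finM PS.neM by (simp add: card_gt_0_iff)
  have mQpos: "mQ > 0" unfolding mQ_def using PQ.finM PQ.neM by (simp add: card_gt_0_iff)
  define Den where "Den = mS * NS2"
  have Denpos: "Den > 0" unfolding Den_def using mSpos NS2pos by simp
  define tau where "tau = NSR / NS2"
  have tau1: "tau \<le> 1" unfolding tau_def using NSRle NS2pos by simp
  have tau0: "tau \<ge> 1 - \<eta>" unfolding tau_def using R(2) NS2pos unfolding NSR_def NS2_def
    by (simp add: field_simps)
  define w where "w K = iso_weight MotS K" for K
  define v where "v L = iso_weight MotQ L" for L
  have sumw: "(\<Sum>K\<in>?CS. w K) = 1" unfolding w_def by (rule PS.sum_weights)
  have sumv: "(\<Sum>L\<in>?CQ. v L) = 1" unfolding v_def by (rule PQ.sum_weights)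
  have w0: "0 \<le> w K" for K unfolding w_def iso_weight_def by simp
  have w1: "w K \<le> 1" if "K \<in> ?CS" for K
  proof -
    have "card K \<le> card MotS" using PS.class_sub[OF that] PS.finM by (rule card_mono[rotated])
    then show ?thesis unfolding w_def iso_weight_def using mSpos unfolding mS_def by simp
  qed
  have v1: "v L \<le> 1" if "L \<in> ?CQ" for L
  proof -
    have "card L \<le> card MotQ" using PQ.class_sub[OF that] PQ.finM by (rule card_mono[rotated])
    then show ?thesis unfolding v_def iso_weight_def using mQpos unfolding mQ_def by simp
  qed
  define H where "H K L = real (cnt R K L) / Den" for K L
  have H0: "0 \<le> H K L" for K L unfolding H_def using Denpos by simp
  define col where "col L = (\<Sum>K\<in>?CS. H K L)" for L
  have rowH: "(\<Sum>L\<in>?CQ. H K L) = w K * tau" if "K \<in> ?CS" for K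
  proof -
    have "(\<Sum>L\<in>?CQ. H K L) = real (\<Sum>L\<in>?CQ. cnt R K L) / Den"
      unfolding H_def by (simp add: sum_divide_distrib)
    also have "\<dots> = real (card K) * NSR / Den" using rows_count[OF that, of R] unfolding NSR_def by simp
    also have "\<dots> = w K * tau" unfolding w_def iso_weight_def tau_def Den_def mS_def
      using NS2pos mSpos unfolding mS_def by (simp add: field_simps)
    finally show ?thesis .
  qed
  have colv: "col L \<le> v L" if "L \<in> ?CQ" for L
  proof -
    define r where "r = R + dS + \<delta> + dQ"
    have rr: "r + dQ + \<delta> + dS = R + 2 * c" unfolding r_def c_def by simp
    have "col L = real (\<Sum>K\<in>?CS. cnt R K L) / Den"
      unfolding col_def H_def by (simp add: sum_divide_distrib)
    also have "\<dots> = real (card {x \<in> X R. clsQ (phi x) = L}) / Den" using cols_count by simp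
    also have "\<dots> \<le> real (card L * Ncount BQ r) / Den"
      using col_bound[OF that, of R] Denpos unfolding r_def
      by (intro divide_right_mono) (auto simp del: of_nat_mult simp add: of_nat_mult[symmetric])
    also have "\<dots> \<le> real (card L) / mQ"
    proof -
      have "card MotQ * Ncount BQ r \<le> card MotS * Ncount BS (R + 2 * c)" using mass[of r] rr by simp
      then have "mQ * real (Ncount BQ r) \<le> Den" unfolding mQ_def Den_def mS_def NS2_def
        by (metis of_nat_le_iff of_nat_mult)
      then have "real (card L) * (mQ * real (Ncount BQ r)) \<le> real (card L) * Den"
        by (intro mult_left_mono) auto
      then show ?thesis using Denpos mQpos by (simp add: field_simps)
    qed
    also have "\<dots> = v L" unfolding v_def iso_weight_def mQ_def ..
    finally show ?thesis .
  qed
  have totH: "(\<Sum>K\<in>?CS. \<Sum>L\<in>?CQ. H K L) = tau"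
  proof -
    have "(\<Sum>K\<in>?CS. \<Sum>L\<in>?CQ. H K L) = (\<Sum>K\<in>?CS. w K * tau)" using rowH by simp
    also have "\<dots> = tau" using sumw by (simp add: sum_distrib_right[symmetric])
    finally show ?thesis .
  qed
  have sumcol: "(\<Sum>L\<in>?CQ. col L) = tau"
    unfolding col_def using totH by (simp add: sum.swap[of _ ?CQ])
  define G where "G K L = w K * (v L - col L)" for K L
  have G0: "0 \<le> G K L" if "L \<in> ?CQ" for K L unfolding G_def using w0 colv[OF that] by simp
  define F where "F K L = H K L + G K L" for K L
  have Frow: "(\<Sum>L\<in>?CQ. F K L) = w K" if "K \<in> ?CS" for K
  proof -
    have "(\<Sum>L\<in>?CQ. F K L) = (\<Sum>L\<in>?CQ. H K L) + w K * ((\<Sum>L\<in>?CQ. v L) - (\<Sum>L\<in>?CQ. col L))"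
      unfolding F_def G_def by (simp add: sum.distrib sum_distrib_left sum_subtractf right_diff_distrib)
    also have "\<dots> = w K" using rowH[OF that] sumv sumcol by (simp add: algebra_simps)
    finally show ?thesis .
  qed
  have Fcol: "(\<Sum>K\<in>?CS. F K L) = v L" for L
  proof -
    have "(\<Sum>K\<in>?CS. F K L) = col L + (\<Sum>K\<in>?CS. w K) * (v L - col L)"
      unfolding F_def G_def col_def by (simp add: sum.distrib sum_distrib_right)
    also have "\<dots> = v L" using sumw by simp
    finally show ?thesis .
  qed
  have Ftot: "(\<Sum>K\<in>?CS. \<Sum>L\<in>?CQ. F K L) = 1" using Frow sumw by simp
  have Frange: "\<forall>K\<in>?CS. \<forall>L\<in>?CQ. F K L \<in> {0..1}"
  proof (intro ballI)
    fix K L assume KL: "K \<in> ?CS" "L \<in> ?CQ"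
    have "0 \<le> F K L" unfolding F_def using H0 G0[OF KL(2)] by (simp add: add_nonneg_nonneg)
    moreover have "F K L \<le> 1"
    proof -
      have "G K L \<le> v L - col L" unfolding G_def using w1[OF KL(1)] colv[OF KL(2)]
        by (metis diff_ge_0_iff_ge mult_left_le_one_le w0)
      moreover have "H K L \<le> col L" unfolding col_def
        using KL(1) PS.classes_finite H0 by (intro member_le_sum) auto
      ultimately show ?thesis unfolding F_def using v1[OF KL(2)] by linarith
    qed
    ultimately show "F K L \<in> {0..1}" by simp
  qed
  define D where "D K L = dC S (class_rep K) Q (class_rep L) \<alpha>" for K L
  have costle: "F K L * D K L \<le> H K L * (2 * \<delta>) + G K L * \<alpha>" if KL: "K \<in> ?CS" "L \<in> ?CQ" for K L
  proof -
    have "H K L * D K L \<le> H K L * (2 * \<delta>)"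
    proof (cases "cnt R K L > 0")
      case True
      then show ?thesis using dC_pos_pair[OF True KL] H0 unfolding D_def by (simp add: mult_left_mono)
    next
      case False
      then show ?thesis unfolding H_def by simp
    qed
    moreover have "G K L * D K L \<le> G K L * \<alpha>"
    proof -
      have "class_rep K \<in> S" using PS.class_rep_mem[OF KL(1)] PS.class_sub[OF KL(1)] PS.MsubS by blast
      moreover have "class_rep L \<in> Q" using PQ.class_rep_mem[OF KL(2)] PQ.class_sub[OF KL(2)] PQ.MsubS by blast
      ultimately have "D K L \<le> \<alpha>" unfolding D_def using dC_bounds(2)[OF PS.locfin PQ.locfin _ _ \<alpha>0] by blast
      then show ?thesis using G0[OF KL(2)] by (simp add: mult_left_mono)
    qed
    ultimately show ?thesis unfolding F_def by (simp add: distrib_right)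
  qed
  have totG: "(\<Sum>K\<in>?CS. \<Sum>L\<in>?CQ. G K L) = 1 - tau"
  proof -
    have "(\<Sum>K\<in>?CS. \<Sum>L\<in>?CQ. G K L) = (\<Sum>K\<in>?CS. w K * (1 - tau))"
      unfolding G_def using sumv sumcol by (simp add: sum_distrib_left[symmetric] sum_subtractf)
    also have "\<dots> = 1 - tau" using sumw by (simp add: sum_distrib_right[symmetric])
    finally show ?thesis .
  qed
  have "EMD_iso S MotS Q MotQ \<alpha> \<le> (\<Sum>K\<in>?CS. \<Sum>L\<in>?CQ. F K L * D K L)"
    unfolding D_def
  proof (rule emd_le_cost)
    show "\<forall>K\<in>?CS. \<forall>L\<in>?CQ. F K L \<in> {0..1}" by (rule Frange)
    show "\<forall>K\<in>?CS. (\<Sum>L\<in>?CQ. F K L) \<le> iso_weight MotS K" using Frow unfolding w_def by simp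
    show "\<forall>L\<in>?CQ. (\<Sum>K\<in>?CS. F K L) \<le> iso_weight MotQ L" using Fcol unfolding v_def by simp
    show "(\<Sum>K\<in>?CS. \<Sum>L\<in>?CQ. F K L) = 1" by (rule Ftot)
  qed
  also have "\<dots> \<le> (\<Sum>K\<in>?CS. \<Sum>L\<in>?CQ. H K L * (2 * \<delta>) + G K L * \<alpha>)"
    using costle by (intro sum_mono) auto
  also have "\<dots> = (\<Sum>K\<in>?CS. \<Sum>L\<in>?CQ. H K L) * (2 * \<delta>) + (\<Sum>K\<in>?CS. \<Sum>L\<in>?CQ. G K L) * \<alpha>"
    by (simp only: sum.distrib sum_distrib_right)
  also have "\<dots> = 2 * \<delta> * tau + \<alpha> * (1 - tau)"
    using totH totG by simp
  also have "\<dots> \<le> 2 * \<delta> + \<alpha> * \<eta>"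
  proof -
    have "2 * \<delta> * tau \<le> 2 * \<delta>" using tau1 \<delta>0 by simp
    moreover have "\<alpha> * (1 - tau) \<le> \<alpha> * \<eta>" using tau0 \<alpha>0 by (intro mult_left_mono) auto
    ultimately show ?thesis by linarith
  qed
  finally show ?thesis .
qed

end

context two
begin

lemma emd_le: "EMD_iso S MotS Q MotQ \<alpha> \<le> 2 * \<delta>"
proof (rule field_le_epsilon)
  fix e :: real assume e: "e > 0"
  define \<eta> where "\<eta> = min (1/2) (e / (\<alpha> + 1))"
  have \<eta>: "0 < \<eta>" "\<eta> < 1" unfolding \<eta>_def using e \<alpha>0 by auto
  have "\<alpha> * \<eta> \<le> (\<alpha> + 1) * (e / (\<alpha> + 1))"
    using \<eta> \<alpha>0 unfolding \<eta>_def by (intro mult_mono) auto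
  also have "\<dots> = e" using \<alpha>0 by simp
  finally have "\<alpha> * \<eta> \<le> e" .
  then show "EMD_iso S MotS Q MotQ \<alpha> \<le> 2 * \<delta> + e" using emd_eta[OF \<eta>] by linarith
qed

end

lemma key:
  fixes S Q BS MotS BQ MotQ :: "'a::euclidean_space set" and \<alpha> t :: real
  assumes "periodic_rep BS MotS S" and "periodic_rep BQ MotQ Q" and "\<alpha> \<ge> 0"
    and "bottleneck_dist S Q < ereal t"
  shows "t > 0 \<and> EMD_iso S MotS Q MotQ \<alpha> \<le> 2 * t"
proof -
  interpret PS: per BS MotS S by unfold_locales (rule assms(1))
  interpret PQ: per BQ MotQ Q by unfold_locales (rule assms(2))
  obtain g where g: "bij_betw g S Q" "(SUP p\<in>S. ereal (norm (p - g p))) < ereal t"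
    using assms(4) unfolding bottleneck_dist_def by (auto simp: INF_less_iff)
  have d: "dist x (g x) < t" if "x \<in> S" for x
  proof -
    have "ereal (norm (x - g x)) \<le> (SUP p\<in>S. ereal (norm (p - g p)))" using that by (rule SUP_upper)
    then have "ereal (norm (x - g x)) < ereal t" using g(2) by (rule le_less_trans)
    then show ?thesis by (simp add: dist_norm)
  qed
  obtain x where "x \<in> MotS" using PS.neM by blast
  then have "x \<in> S" using PS.MsubS by blast
  then have t0: "t > 0" using d[of x] by (meson dist_not_less_zero less_le_trans linorder_not_le)
  interpret T: two BS MotS S BQ MotQ Q g t \<alpha>
    by unfold_locales (use g(1) d t0 assms(3) in \<open>auto intro: less_imp_le\<close>)
  show ?thesis using T.emd_le t0 by simp
qed

theorem mainTheorem4: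
  fixes S Q BS MotS BQ MotQ :: "'a::euclidean_space set" and \<alpha> :: real
  assumes "periodic_rep BS MotS S"
    and "periodic_rep BQ MotQ Q"
    and "bottleneck_dist S Q < ereal (packing_radius Q)"
    and "\<alpha> \<ge> 0"
  shows "ereal (EMD_iso S MotS Q MotQ \<alpha>) \<le> 2 * bottleneck_dist S Q"
proof (cases "bottleneck_dist S Q")
  case (real d)
  have "EMD_iso S MotS Q MotQ \<alpha> \<le> 2 * d"
  proof (rule field_le_epsilon)
    fix e :: real assume e: "e > 0"
    have "bottleneck_dist S Q < ereal (d + e / 2)" using real e by simp
    then have "EMD_iso S MotS Q MotQ \<alpha> \<le> 2 * (d + e / 2)" using key[OF assms(1,2,4)] by blast
    then show "EMD_iso S MotS Q MotQ \<alpha> \<le> 2 * d + e" by simp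
  qed
  then show ?thesis using real by simp
next
  case PInf
  then show ?thesis using assms(3) by simp
next
  case MInf
  then have "bottleneck_dist S Q < ereal (-1)" by simp
  then show ?thesis using key[OF assms(1,2,4)] by force
qed

end
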